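(* Let $\mathcal{H}=W_{r_1}\otimes\dots\otimes W_{r_N}$ with $\dim W_{r_i}=r_i+1$, and let $\xi_1,\dots,\xi_N\in\mathbb{C}$. Assume the family of $R$-matrices described in the context satisfies the Yang–Baxter equation and the initial condition $R^{W_rW_r}(0)=P^{W_rW_r}$. Fix a site $n\in\{1,\dots,N\}$ and assume that the transfer matrices $t^{(r_i)}(\xi_i)$, $1\le i\le n$, are invertible operators on $\mathcal{H}$. Then for every operator $E^\alpha\in\operatorname{End}(W_{r_n})$, denoting by $E^\alpha_n$ its action on the $n$-th tensor factor of $\mathcal{H}$ and by $E^\alpha_0$ its action on the auxiliary space $W_0\simeq W_{r_n}$, \[ E_n^\alpha=\Big\{\prod_{i=1}^{n-1}t^{(r_i)}(\xi_i)\Big\}\,\operatorname{tr}_0\big(E_0^\alpha\,T^{(r_n)}_{0,1\dots N}(\xi_n)\big)\,\Big\{\prod_{i=1}^{n}t^{(r_i)}(\xi_i)\Big\}^{-1}. \]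
   Context: For finite-dimensional spaces $W_r$ (of dimension $r+1$) one is given, for every pair $(W_r,W_s)$, an operator-valued function $R^{W_rW_s}(\lambda)\in\operatorname{End}(W_r\otimes W_s)$. For spaces labelled $a,b$ in a tensor product, $R_{ab}(\lambda)$ denotes this operator acting on factors $a,b$ (identity elsewhere). Yang–Baxter equation: for any three such spaces labelled $1,2,3$ and any $\lambda_1,\lambda_2,\lambda_3$, $R_{12}(\lambda_1-\lambda_2)R_{13}(\lambda_1-\lambda_3)R_{23}(\lambda_2-\lambda_3)=R_{23}(\lambda_2-\lambda_3)R_{13}(\lambda_1-\lambda_3)R_{12}(\lambda_1-\lambda_2)$. $P^{W_rW_r}$ is the permutation (flip) operator on $W_r\otimes W_r$. For a chosen auxiliary space $W_0$ (labelled 0) isomorphic to $W_{r_n}$, the monodromy matrix is $T^{(r_n)}_{0,1\dots N}(\lambda)=R^{W_0W_{r_N}}_{0N}(\lambda-\xi_N)\cdots R^{W_0W_{r_1}}_{01}(\lambda-\xi_1)\in\operatorname{End}(W_0\otimes\mathcal{H})$, and the transfer matrix is $t^{(r_n)}(\lambda)=\operatorname{tr}_0 T^{(r_n)}_{0,1\dots N}(\lambda)\in\operatorname{End}(\mathcal{H})$, the partial trace being over $W_0$. The transfer matrices $t^{(r_i)}(\xi_i)$ mutually commute. *)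

theory Defs
  imports Complex_Main
begin

text \<open>Tensor factors are labelled by natural numbers (slots); slot 0 is the
auxiliary space, slots 1..N the sites. A labelling rho assigns to slot i the label r of the space
W_r (of dimension r+1, basis indices 0..r). A basis vector of the tensor product over a finite set
S of slots is a multi-index x :: nat => nat with x i <= rho i for i in S and x i = 0 outside S.
An operator is given by its matrix entries A x y (row x, column y).\<close>

type_synonym mop = "(nat \<Rightarrow> nat) \<Rightarrow> (nat \<Rightarrow> nat) \<Rightarrow> complex"

text \<open>Family of R-matrices: Rm r s lam (i,j) (k,l) is the entry of R^{W_r W_s}(lam) in the
basis e_i (x) e_j (row), e_k (x) e_l (column), with i,k <= r and j,l <= s.\<close>
type_synonym rfam = "nat \<Rightarrow> nat \<Rightarrow> complex \<Rightarrow> nat \<times> nat \<Rightarrow> nat \<times> nat \<Rightarrow> complex"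

definition states :: "(nat \<Rightarrow> nat) \<Rightarrow> nat set \<Rightarrow> (nat \<Rightarrow> nat) set" where
  "states \<rho> S = {x. \<forall>i. (i \<in> S \<longrightarrow> x i \<le> \<rho> i) \<and> (i \<notin> S \<longrightarrow> x i = 0)}"

definition op_mult :: "(nat \<Rightarrow> nat) \<Rightarrow> nat set \<Rightarrow> mop \<Rightarrow> mop \<Rightarrow> mop" where
  "op_mult \<rho> S A B = (\<lambda>x y. \<Sum>z\<in>states \<rho> S. A x z * B z y)"

definition op_id :: mop where
  "op_id = (\<lambda>x y. if x = y then 1 else 0)"

definition op_eq :: "(nat \<Rightarrow> nat) \<Rightarrow> nat set \<Rightarrow> mop \<Rightarrow> mop \<Rightarrow> bool" where
  "op_eq \<rho> S A B \<longleftrightarrow> (\<forall>x\<in>states \<rho> S. \<forall>y\<in>states \<rho> S. A x y = B x y)"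

definition op_prod :: "(nat \<Rightarrow> nat) \<Rightarrow> nat set \<Rightarrow> mop list \<Rightarrow> mop" where
  "op_prod \<rho> S As = foldr (op_mult \<rho> S) As op_id"

definition invertible_op :: "(nat \<Rightarrow> nat) \<Rightarrow> nat set \<Rightarrow> mop \<Rightarrow> bool" where
  "invertible_op \<rho> S A \<longleftrightarrow>
     (\<exists>B. op_eq \<rho> S (op_mult \<rho> S A B) op_id \<and> op_eq \<rho> S (op_mult \<rho> S B A) op_id)"

definition local_op :: "nat \<Rightarrow> (nat \<Rightarrow> nat \<Rightarrow> complex) \<Rightarrow> mop" where
  "local_op a M = (\<lambda>x y. M (x a) (y a) * (if \<forall>c. c \<noteq> a \<longrightarrow> x c = y c then 1 else 0))"

definition two_site_op :: "nat \<Rightarrow> nat \<Rightarrow> (nat \<times> nat \<Rightarrow> nat \<times> nat \<Rightarrow> complex) \<Rightarrow> mop" where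
  "two_site_op a b M = (\<lambda>x y. M (x a, x b) (y a, y b) *
      (if \<forall>c. c \<noteq> a \<and> c \<noteq> b \<longrightarrow> x c = y c then 1 else 0))"

definition Rop :: "rfam \<Rightarrow> (nat \<Rightarrow> nat) \<Rightarrow> nat \<Rightarrow> nat \<Rightarrow> complex \<Rightarrow> mop" where
  "Rop Rm \<rho> a b lam = two_site_op a b (Rm (\<rho> a) (\<rho> b) lam)"

definition YBE :: "rfam \<Rightarrow> bool" where
  "YBE Rm \<longleftrightarrow> (\<forall>r s t (l1::complex) l2 l3.
     let \<rho> = (\<lambda>i::nat. if i = 1 then r else if i = 2 then s else if i = 3 then t else 0);
         S = {1,2,3::nat}
     in op_eq \<rho> S
          (op_mult \<rho> S (op_mult \<rho> S (Rop Rm \<rho> 1 2 (l1 - l2)) (Rop Rm \<rho> 1 3 (l1 - l3)))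
                        (Rop Rm \<rho> 2 3 (l2 - l3)))
          (op_mult \<rho> S (op_mult \<rho> S (Rop Rm \<rho> 2 3 (l2 - l3)) (Rop Rm \<rho> 1 3 (l1 - l3)))
                        (Rop Rm \<rho> 1 2 (l1 - l2))))"

definition initial_cond :: "rfam \<Rightarrow> bool" where
  "initial_cond Rm \<longleftrightarrow> (\<forall>r i j k l. i \<le> r \<longrightarrow> j \<le> r \<longrightarrow> k \<le> r \<longrightarrow> l \<le> r \<longrightarrow>
      Rm r r 0 (i, j) (k, l) = (if i = l \<and> j = k then 1 else 0))"

definition monodromy :: "rfam \<Rightarrow> (nat \<Rightarrow> nat) \<Rightarrow> nat \<Rightarrow> (nat \<Rightarrow> complex) \<Rightarrow> nat \<Rightarrow> complex \<Rightarrow> mop" where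
  "monodromy Rm \<rho> N \<xi> ra lam =
     op_prod (\<rho>(0 := ra)) {0..N}
       (map (\<lambda>i. Rop Rm (\<rho>(0 := ra)) 0 i (lam - \<xi> i)) (rev [1..<Suc N]))"

definition ptrace0 :: "nat \<Rightarrow> mop \<Rightarrow> mop" where
  "ptrace0 ra A = (\<lambda>x y. \<Sum>a\<le>ra. A (x(0 := a)) (y(0 := a)))"

definition transfer :: "rfam \<Rightarrow> (nat \<Rightarrow> nat) \<Rightarrow> nat \<Rightarrow> (nat \<Rightarrow> complex) \<Rightarrow> nat \<Rightarrow> complex \<Rightarrow> mop" where
  "transfer Rm \<rho> N \<xi> ra lam = ptrace0 ra (monodromy Rm \<rho> N \<xi> ra lam)"

end

theory Submission
  imports Defs
begin


lemma sum_single: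
  assumes "finite A" "zz \<in> A" "\<And>z. z \<in> A \<Longrightarrow> z \<noteq> zz \<Longrightarrow> f z = 0"
  shows "sum f A = (f zz :: complex)"
proof -
  have "sum f A = f zz + sum f (A - {zz})" using assms by (simp add: sum.remove)
  also have "sum f (A - {zz}) = 0" using assms by (intro sum.neutral) auto
  finally show ?thesis by simp
qed

lemma states_finite: "finite S \<Longrightarrow> finite (states \<rho> S)"
proof -
  assume fS: "finite S"
  define M where "M = Max (insert 0 (\<rho> ` S))"
  have M: "\<rho> i \<le> M" if "i \<in> S" for i
    unfolding M_def using fS that by (intro Max_ge) auto
  have "states \<rho> S \<subseteq> {f. \<forall>x. (x \<in> S \<longrightarrow> f x \<in> {..M}) \<and> (x \<notin> S \<longrightarrow> f x = 0)}"
  proof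
    fix f assume "f \<in> states \<rho> S"
    then have "\<forall>i. (i \<in> S \<longrightarrow> f i \<le> \<rho> i) \<and> (i \<notin> S \<longrightarrow> f i = 0)" by (simp add: states_def)
    then show "f \<in> {f. \<forall>x. (x \<in> S \<longrightarrow> f x \<in> {..M}) \<and> (x \<notin> S \<longrightarrow> f x = 0)}"
      using M by simp (meson order_trans)
  qed
  moreover have "finite {f. \<forall>x. (x \<in> S \<longrightarrow> f x \<in> {..M}) \<and> (x \<notin> S \<longrightarrow> f x = (0::nat))}"
    using fS by (intro finite_set_of_finite_funs) auto
  ultimately show ?thesis by (rule finite_subset)
qed

lemma op_mult_assoc:
  assumes "finite S"
  shows "op_mult \<rho> S (op_mult \<rho> S A B) C = op_mult \<rho> S A (op_mult \<rho> S B C)"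
proof (intro ext)
  fix x y
  have "op_mult \<rho> S (op_mult \<rho> S A B) C x y = (\<Sum>z\<in>states \<rho> S. \<Sum>w\<in>states \<rho> S. A x w * B w z * C z y)"
    unfolding op_mult_def by (simp add: sum_distrib_right)
  also have "\<dots> = (\<Sum>w\<in>states \<rho> S. \<Sum>z\<in>states \<rho> S. A x w * B w z * C z y)"
    by (rule sum.swap)
  also have "\<dots> = op_mult \<rho> S A (op_mult \<rho> S B C) x y"
    unfolding op_mult_def by (simp add: sum_distrib_left mult.assoc)
  finally show "op_mult \<rho> S (op_mult \<rho> S A B) C x y = op_mult \<rho> S A (op_mult \<rho> S B C) x y" .
qed

lemma op_eq_refl[simp]: "op_eq \<rho> S A A" by (simp add: op_eq_def)
lemma op_eq_sym: "op_eq \<rho> S A B \<Longrightarrow> op_eq \<rho> S B A" by (simp add: op_eq_def)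
lemma op_eq_trans[trans]: "op_eq \<rho> S A B \<Longrightarrow> op_eq \<rho> S B C \<Longrightarrow> op_eq \<rho> S A C"
  by (simp add: op_eq_def)

lemma op_eq_mult:
  assumes "op_eq \<rho> S A A'" "op_eq \<rho> S B B'"
  shows "op_eq \<rho> S (op_mult \<rho> S A B) (op_mult \<rho> S A' B')"
  using assms unfolding op_eq_def op_mult_def by (auto intro!: sum.cong)

lemma op_eq_multL: "op_eq \<rho> S A A' \<Longrightarrow> op_eq \<rho> S (op_mult \<rho> S A B) (op_mult \<rho> S A' B)"
  by (rule op_eq_mult) auto
lemma op_eq_multR: "op_eq \<rho> S B B' \<Longrightarrow> op_eq \<rho> S (op_mult \<rho> S A B) (op_mult \<rho> S A B')"
  by (rule op_eq_mult) auto

lemma op_mult_id_left: assumes "finite S" shows "op_eq \<rho> S (op_mult \<rho> S op_id A) A"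
  unfolding op_eq_def op_mult_def op_id_def
proof (intro ballI)
  fix x y assume "x \<in> states \<rho> S" "y \<in> states \<rho> S"
  then show "(\<Sum>z\<in>states \<rho> S. (if x = z then 1 else 0) * A z y) = A x y"
    by (subst sum_single[where zz=x]) (auto simp: states_finite assms)
qed

lemma op_mult_id_right: assumes "finite S" shows "op_eq \<rho> S (op_mult \<rho> S A op_id) A"
  unfolding op_eq_def op_mult_def op_id_def
proof (intro ballI)
  fix x y assume "x \<in> states \<rho> S" "y \<in> states \<rho> S"
  then show "(\<Sum>z\<in>states \<rho> S. A x z * (if z = y then 1 else 0)) = A x y"
    by (subst sum_single[where zz=y]) (auto simp: states_finite assms)
qed

lemma op_prod_Nil[simp]: "op_prod \<rho> S [] = op_id" by (simp add: op_prod_def)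
lemma op_prod_Cons[simp]: "op_prod \<rho> S (x # xs) = op_mult \<rho> S x (op_prod \<rho> S xs)"
  by (simp add: op_prod_def)

lemma op_prod_append:
  assumes "finite S"
  shows "op_eq \<rho> S (op_prod \<rho> S (xs @ ys)) (op_mult \<rho> S (op_prod \<rho> S xs) (op_prod \<rho> S ys))"
proof (induction xs)
  case Nil then show ?case using op_eq_sym[OF op_mult_id_left[OF assms]] by simp
next
  case (Cons x xs)
  have "op_eq \<rho> S (op_prod \<rho> S ((x # xs) @ ys)) (op_mult \<rho> S x (op_mult \<rho> S (op_prod \<rho> S xs) (op_prod \<rho> S ys)))"
    using Cons by (simp add: op_eq_multR)
  then show ?case by (simp add: op_mult_assoc[OF assms])
qed

lemma op_prod_cong:
  assumes "\<And>x. x \<in> set xs \<Longrightarrow> op_eq \<rho> S (f x) (g x)"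
  shows "op_eq \<rho> S (op_prod \<rho> S (map f xs)) (op_prod \<rho> S (map g xs))"
  using assms by (induction xs) (auto intro: op_eq_mult)

definition smul :: "complex \<Rightarrow> mop \<Rightarrow> mop" where
  "smul c A = (\<lambda>x y. c * A x y)"

lemma smul_multL: "op_mult \<rho> S (smul c A) B = smul c (op_mult \<rho> S A B)"
  by (simp add: smul_def op_mult_def fun_eq_iff sum_distrib_left mult.assoc)
lemma smul_multR: "op_mult \<rho> S A (smul c B) = smul c (op_mult \<rho> S A B)"
  by (simp add: smul_def op_mult_def fun_eq_iff sum_distrib_left mult.left_commute)
lemma smul_cong: "op_eq \<rho> S A B \<Longrightarrow> op_eq \<rho> S (smul c A) (smul c B)"
  by (simp add: smul_def op_eq_def)
lemma smul_smul: "smul c (smul d A) = smul (c * d) A"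
  by (simp add: smul_def fun_eq_iff)
lemma smul_one: "smul 1 A = A"
  by (simp add: smul_def)

definition comm :: "(nat \<Rightarrow> nat) \<Rightarrow> nat set \<Rightarrow> mop \<Rightarrow> mop \<Rightarrow> bool" where
  "comm \<rho> S A B \<longleftrightarrow> op_eq \<rho> S (op_mult \<rho> S A B) (op_mult \<rho> S B A)"

lemma comm_sym: "comm \<rho> S A B \<Longrightarrow> comm \<rho> S B A"
  by (simp add: comm_def op_eq_sym)

lemma comm_cong: "comm \<rho> S A B \<Longrightarrow> op_eq \<rho> S B B' \<Longrightarrow> comm \<rho> S A B'"
  unfolding comm_def
  by (meson op_eq_multL op_eq_multR op_eq_sym op_eq_trans)

lemma comm_smul: "comm \<rho> S A B \<Longrightarrow> comm \<rho> S A (smul c B)"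
  unfolding comm_def by (simp add: smul_multL smul_multR smul_cong)

lemma comm_prod:
  assumes fS: "finite S" and "\<And>x. x \<in> set xs \<Longrightarrow> comm \<rho> S A x"
  shows "comm \<rho> S A (op_prod \<rho> S xs)"
  using assms(2)
proof (induction xs)
  case Nil
  then show ?case unfolding comm_def using op_mult_id_left[OF fS] op_mult_id_right[OF fS]
    by (simp add: op_mult_assoc) (meson op_eq_sym op_eq_trans)
next
  case (Cons x xs)
  let ?m = "op_mult \<rho> S" let ?P = "op_prod \<rho> S xs"
  have cx: "comm \<rho> S A x" and cP: "comm \<rho> S A ?P" using Cons by auto
  have "op_eq \<rho> S (?m A (?m x ?P)) (?m (?m A x) ?P)" by (simp add: op_mult_assoc[OF fS])
  also have "op_eq \<rho> S \<dots> (?m (?m x A) ?P)" using cx by (simp add: comm_def op_eq_multL)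
  also have "op_eq \<rho> S \<dots> (?m x (?m A ?P))" by (simp add: op_mult_assoc[OF fS])
  also have "op_eq \<rho> S \<dots> (?m x (?m ?P A))" using cP by (simp add: comm_def op_eq_multR)
  also have "op_eq \<rho> S \<dots> (?m (?m x ?P) A)" by (simp add: op_mult_assoc[OF fS])
  finally show ?case by (simp add: comm_def)
qed

lemma comm_prod_prod:
  assumes fS: "finite S" and "\<And>x y. x \<in> set xs \<Longrightarrow> y \<in> set ys \<Longrightarrow> comm \<rho> S x y"
  shows "comm \<rho> S (op_prod \<rho> S xs) (op_prod \<rho> S ys)"
  using assms by (intro comm_prod comm_sym[OF comm_prod]) (auto intro: comm_sym)

lemma op_prod_swap:
  assumes fS: "finite S" and "\<And>x y. x \<in> set xs \<Longrightarrow> y \<in> set ys \<Longrightarrow> comm \<rho> S x y"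
  shows "op_eq \<rho> S (op_prod \<rho> S (xs @ ys)) (op_prod \<rho> S (ys @ xs))"
proof -
  have "op_eq \<rho> S (op_prod \<rho> S (xs @ ys)) (op_mult \<rho> S (op_prod \<rho> S xs) (op_prod \<rho> S ys))"
    by (rule op_prod_append[OF fS])
  also have "op_eq \<rho> S \<dots> (op_mult \<rho> S (op_prod \<rho> S ys) (op_prod \<rho> S xs))"
    using comm_prod_prod[OF assms] by (simp add: comm_def)
  also have "op_eq \<rho> S \<dots> (op_prod \<rho> S (ys @ xs))"
    by (rule op_eq_sym[OF op_prod_append[OF fS]])
  finally show ?thesis .
qed


definition loc :: "nat set \<Rightarrow> mop \<Rightarrow> bool" where
  "loc K A \<longleftrightarrow> (\<forall>x y. (\<exists>c. c \<notin> K \<and> x c \<noteq> y c) \<longrightarrow> A x y = 0) \<and>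
    (\<forall>x y x' y'. (\<forall>c\<in>K. x c = x' c \<and> y c = y' c) \<longrightarrow> (\<forall>c. c \<notin> K \<longrightarrow> x c = y c) \<longrightarrow>
        (\<forall>c. c \<notin> K \<longrightarrow> x' c = y' c) \<longrightarrow> A x y = A x' y')"

lemma loc_two_site: "loc {a,b} (two_site_op a b M)"
  unfolding loc_def two_site_op_def by auto

lemma loc_local: "loc {a} (local_op a M)"
  unfolding loc_def local_op_def by auto

lemma loc_zero: "loc K A \<Longrightarrow> c \<notin> K \<Longrightarrow> x c \<noteq> y c \<Longrightarrow> A x y = 0"
  unfolding loc_def by blast

lemma loc_dep: "loc K A \<Longrightarrow> (\<And>c. c \<in> K \<Longrightarrow> x c = x' c \<and> y c = y' c) \<Longrightarrow> (\<And>c. c \<notin> K \<Longrightarrow> x c = y c)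
   \<Longrightarrow> (\<And>c. c \<notin> K \<Longrightarrow> x' c = y' c) \<Longrightarrow> A x y = A x' y'"
  unfolding loc_def by blast

lemma mult_single:
  assumes fS: "finite S" and A: "loc K1 A" and x: "x \<in> states \<rho> S" and y: "y \<in> states \<rho> S"
    and B: "loc K2 B" and d: "K1 \<inter> K2 = {}"
  shows "op_mult \<rho> S A B x y = A x (\<lambda>c. if c \<in> K1 then y c else x c) * B (\<lambda>c. if c \<in> K1 then y c else x c) y"
  unfolding op_mult_def
proof (rule sum_single)
  show "finite (states \<rho> S)" using fS by (rule states_finite)
  show "(\<lambda>c. if c \<in> K1 then y c else x c) \<in> states \<rho> S"
    using x y unfolding states_def by auto
  fix z assume "z \<in> states \<rho> S" "z \<noteq> (\<lambda>c. if c \<in> K1 then y c else x c)"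
  then obtain c where c: "z c \<noteq> (if c \<in> K1 then y c else x c)" by auto
  show "A x z * B z y = 0"
  proof (cases "\<exists>c. c \<notin> K1 \<and> x c \<noteq> z c")
    case True then show ?thesis using loc_zero[OF A] by auto
  next
    case False
    then have "c \<in> K1" using c by (metis (full_types))
    then have "c \<notin> K2" using d by auto
    then show ?thesis using loc_zero[OF B, of c z y] c \<open>c \<in> K1\<close> by auto
  qed
qed

lemma loc_comm:
  assumes fS: "finite S" and A: "loc K1 A" and B: "loc K2 B" and d: "K1 \<inter> K2 = {}"
  shows "comm \<rho> S A B"
  unfolding comm_def op_eq_def
proof (intro ballI)
  fix x y assume x: "x \<in> states \<rho> S" and y: "y \<in> states \<rho> S"
  define z0 where "z0 = (\<lambda>c. if c \<in> K1 then y c else x c)"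
  define z1 where "z1 = (\<lambda>c. if c \<in> K2 then y c else x c)"
  have d': "K2 \<inter> K1 = {}" using d by auto
  have e1: "op_mult \<rho> S A B x y = A x z0 * B z0 y"
    unfolding z0_def by (rule mult_single[OF fS A x y B d])
  have e2: "op_mult \<rho> S B A x y = B x z1 * A z1 y"
    unfolding z1_def by (rule mult_single[OF fS B x y A d'])
  show "op_mult \<rho> S A B x y = op_mult \<rho> S B A x y"
  proof (cases "\<forall>c. c \<notin> K1 \<and> c \<notin> K2 \<longrightarrow> x c = y c")
    case True
    have "A x z0 = A z1 y"
      by (rule loc_dep[OF A]) (use True d in \<open>auto simp: z0_def z1_def\<close>)
    moreover have "B z0 y = B x z1"
      by (rule loc_dep[OF B]) (use True d in \<open>auto simp: z0_def z1_def\<close>)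
    ultimately show ?thesis using e1 e2 by simp
  next
    case False
    then obtain c where c: "c \<notin> K1" "c \<notin> K2" "x c \<noteq> y c" by auto
    have "B z0 y = 0" by (rule loc_zero[OF B c(2)]) (use c in \<open>simp add: z0_def\<close>)
    moreover have "A z1 y = 0" by (rule loc_zero[OF A c(1)]) (use c in \<open>simp add: z1_def\<close>)
    ultimately show ?thesis using e1 e2 by simp
  qed
qed


section \<open>Swaps\<close>

definition swv :: "nat \<Rightarrow> nat \<Rightarrow> (nat \<Rightarrow> nat) \<Rightarrow> (nat \<Rightarrow> nat)" where
  "swv a b x = x(a := x b, b := x a)"

definition swp :: "nat \<Rightarrow> nat \<Rightarrow> mop \<Rightarrow> mop" where
  "swp a b A = (\<lambda>x y. A (swv a b x) (swv a b y))"

definition trn :: "nat \<Rightarrow> nat \<Rightarrow> nat \<Rightarrow> nat" where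
  "trn a b c = (if c = a then b else if c = b then a else c)"

lemma swv_swv[simp]: "swv a b (swv a b x) = x"
  by (auto simp: swv_def fun_eq_iff)

lemma swv_apply: "swv a b x c = x (trn a b c)"
  by (auto simp: swv_def trn_def)

lemma trn_trn[simp]: "trn a b (trn a b c) = c"
  by (auto simp: trn_def)

lemma swv_eq_iff: "(swv a b x = swv a b y) = (x = y)"
  by (metis swv_swv)

lemma swv_states:
  assumes "a \<in> S" "b \<in> S" "\<rho> a = \<rho> b" "x \<in> states \<rho> S"
  shows "swv a b x \<in> states \<rho> S"
  using assms unfolding states_def swv_def by auto

lemma swp_mult:
  assumes fS: "finite S" and ab: "a \<in> S" "b \<in> S" "\<rho> a = \<rho> b"
  shows "swp a b (op_mult \<rho> S A B) = op_mult \<rho> S (swp a b A) (swp a b B)"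
  unfolding swp_def op_mult_def
proof (intro ext)
  fix x y
  show "(\<Sum>z\<in>states \<rho> S. A (swv a b x) z * B z (swv a b y)) =
        (\<Sum>z\<in>states \<rho> S. A (swv a b x) (swv a b z) * B (swv a b z) (swv a b y))"
    by (rule sum.reindex_bij_witness[where i="swv a b" and j="swv a b"])
       (auto intro: swv_states[OF ab])
qed

lemma swp_id[simp]: "swp a b op_id = op_id"
  by (auto simp: swp_def op_id_def swv_eq_iff)

lemma swp_prod:
  assumes fS: "finite S" and ab: "a \<in> S" "b \<in> S" "\<rho> a = \<rho> b"
  shows "swp a b (op_prod \<rho> S xs) = op_prod \<rho> S (map (swp a b) xs)"
  by (induction xs) (simp_all add: swp_mult[OF assms])

lemma all_trn: "(\<forall>e. P (trn a b e)) = (\<forall>e. P e)"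
  by (metis trn_trn)

lemma swp_two_site:
  "swp a b (two_site_op c d M) = two_site_op (trn a b c) (trn a b d) M"
proof -
  have "(\<forall>e. e \<noteq> c \<and> e \<noteq> d \<longrightarrow> x (trn a b e) = y (trn a b e)) =
        (\<forall>e. e \<noteq> trn a b c \<and> e \<noteq> trn a b d \<longrightarrow> x e = y e)" for x y :: "nat \<Rightarrow> nat"
  proof -
    have "(\<forall>e. e \<noteq> c \<and> e \<noteq> d \<longrightarrow> x (trn a b e) = y (trn a b e)) =
          (\<forall>e. trn a b e \<noteq> c \<and> trn a b e \<noteq> d \<longrightarrow> x (trn a b (trn a b e)) = y (trn a b (trn a b e)))"
      by (rule all_trn[symmetric])
    also have "\<dots> = (\<forall>e. e \<noteq> trn a b c \<and> e \<noteq> trn a b d \<longrightarrow> x e = y e)"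
      by (metis trn_trn)
    finally show ?thesis .
  qed
  then show ?thesis
    unfolding swp_def two_site_op_def by (simp add: swv_apply fun_eq_iff)
qed

lemma swp_local:
  "swp a b (local_op c M) = local_op (trn a b c) M"
proof -
  have "(\<forall>e. e \<noteq> c \<longrightarrow> x (trn a b e) = y (trn a b e)) =
        (\<forall>e. e \<noteq> trn a b c \<longrightarrow> x e = y e)" for x y :: "nat \<Rightarrow> nat"
  proof -
    have "(\<forall>e. e \<noteq> c \<longrightarrow> x (trn a b e) = y (trn a b e)) =
          (\<forall>e. trn a b e \<noteq> c \<longrightarrow> x (trn a b (trn a b e)) = y (trn a b (trn a b e)))"
      by (rule all_trn[symmetric])
    also have "\<dots> = (\<forall>e. e \<noteq> trn a b c \<longrightarrow> x e = y e)"
      by (metis trn_trn)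
    finally show ?thesis .
  qed
  then show ?thesis
    unfolding swp_def local_op_def by (simp add: swv_apply fun_eq_iff)
qed

definition isP :: "(nat \<Rightarrow> nat) \<Rightarrow> nat set \<Rightarrow> nat \<Rightarrow> nat \<Rightarrow> mop \<Rightarrow> bool" where
  "isP \<rho> S a b P \<longleftrightarrow> (\<forall>x\<in>states \<rho> S. \<forall>z\<in>states \<rho> S. P x z = (if z = swv a b x then 1 else 0))"

lemma init_isP:
  assumes init: "initial_cond Rm" and ab: "a \<noteq> b" "a \<in> S" "b \<in> S" "\<rho> a = r" "\<rho> b = r"
  shows "isP \<rho> S a b (two_site_op a b (Rm r r 0))"
  unfolding isP_def
proof (intro ballI)
  fix x z assume x: "x \<in> states \<rho> S" and z: "z \<in> states \<rho> S"
  have le: "x a \<le> r" "x b \<le> r" "z a \<le> r" "z b \<le> r" using x z ab unfolding states_def by auto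
  have "Rm r r 0 (x a, x b) (z a, z b) = (if x a = z b \<and> x b = z a then 1 else 0)"
    using init le unfolding initial_cond_def by blast
  moreover have "(x a = z b \<and> x b = z a \<and> (\<forall>c. c \<noteq> a \<and> c \<noteq> b \<longrightarrow> x c = z c)) = (z = swv a b x)"
    using ab(1) unfolding swv_def fun_eq_iff by (metis fun_upd_apply)
  ultimately show "two_site_op a b (Rm r r 0) x z = (if z = swv a b x then 1 else 0)"
    unfolding two_site_op_def by (auto)
qed

lemma P_mult_left:
  assumes fS: "finite S" and P: "isP \<rho> S a b P" and ab: "a \<in> S" "b \<in> S" "\<rho> a = \<rho> b"
    and x: "x \<in> states \<rho> S"
  shows "op_mult \<rho> S P A x y = A (swv a b x) y"
  unfolding op_mult_def
  by (subst sum_single[where zz="swv a b x"])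
     (use P x swv_states[OF ab x] in \<open>auto simp: isP_def states_finite[OF fS]\<close>)

lemma P_mult_right:
  assumes fS: "finite S" and P: "isP \<rho> S a b P" and ab: "a \<in> S" "b \<in> S" "\<rho> a = \<rho> b"
    and y: "y \<in> states \<rho> S"
  shows "op_mult \<rho> S A P x y = A x (swv a b y)"
  unfolding op_mult_def
proof (subst sum_single[where zz="swv a b y"])
  show "finite (states \<rho> S)" using fS by (rule states_finite)
  show "swv a b y \<in> states \<rho> S" using swv_states[OF ab y] .
  fix z assume "z \<in> states \<rho> S" "z \<noteq> swv a b y"
  then show "A x z * P z y = 0" using P y unfolding isP_def by (auto)
next
  show "A x (swv a b y) * P (swv a b y) y = A x (swv a b y)"
    using P y swv_states[OF ab y] unfolding isP_def by auto
qed

lemma P_comm: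
  assumes fS: "finite S" and P: "isP \<rho> S a b P" and ab: "a \<in> S" "b \<in> S" "\<rho> a = \<rho> b"
  shows "op_eq \<rho> S (op_mult \<rho> S P A) (op_mult \<rho> S (swp a b A) P)"
  unfolding op_eq_def
  by (simp add: P_mult_left[OF assms] P_mult_right[OF assms] swp_def)

lemma P_P:
  assumes fS: "finite S" and P: "isP \<rho> S a b P" and ab: "a \<in> S" "b \<in> S" "\<rho> a = \<rho> b"
  shows "op_eq \<rho> S (op_mult \<rho> S P P) op_id"
  unfolding op_eq_def
proof (intro ballI)
  fix x y assume x: "x \<in> states \<rho> S" and y: "y \<in> states \<rho> S"
  show "op_mult \<rho> S P P x y = op_id x y"
    using P_mult_left[OF assms x] P x y swv_states[OF ab x] unfolding isP_def op_id_def
    by (auto simp: swv_eq_iff[symmetric])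
qed


definition dot :: "nat \<Rightarrow> nat \<Rightarrow> (nat \<times> nat \<Rightarrow> nat \<times> nat \<Rightarrow> complex) \<Rightarrow> (nat \<times> nat \<Rightarrow> nat \<times> nat \<Rightarrow> complex)
   \<Rightarrow> (nat \<times> nat \<Rightarrow> nat \<times> nat \<Rightarrow> complex)" where
  "dot r s M M' = (\<lambda>u v. \<Sum>p\<le>r. \<Sum>q\<le>s. M u (p,q) * M' (p,q) v)"

definition flipM :: "(nat \<times> nat \<Rightarrow> nat \<times> nat \<Rightarrow> complex) \<Rightarrow> (nat \<times> nat \<Rightarrow> nat \<times> nat \<Rightarrow> complex)" where
  "flipM M = (\<lambda>u v. M (snd u, fst u) (snd v, fst v))"

lemma two_site_flip: "two_site_op b a M = two_site_op a b (flipM M)"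
  unfolding two_site_op_def flipM_def by (auto simp: fun_eq_iff conj_commute)

lemma two_site_mult:
  assumes fS: "finite S" and ab: "a \<noteq> b" "a \<in> S" "b \<in> S"
    and x: "x \<in> states \<rho> S" and y: "y \<in> states \<rho> S"
  shows "op_mult \<rho> S (two_site_op a b M) (two_site_op a b M') x y = two_site_op a b (dot (\<rho> a) (\<rho> b) M M') x y"
proof -
  define f where "f z = two_site_op a b M x z * two_site_op a b M' z y" for z
  define g where "g pq = x(a := fst pq, b := snd pq)" for pq :: "nat \<times> nat"
  define G where "G = g ` ({..\<rho> a} \<times> {..\<rho> b})"
  have GS: "G \<subseteq> states \<rho> S"
    using x ab unfolding G_def g_def states_def by auto
  have "op_mult \<rho> S (two_site_op a b M) (two_site_op a b M') x y = sum f (states \<rho> S)"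
    unfolding op_mult_def f_def ..
  also have "\<dots> = sum f G"
  proof (rule sum.mono_neutral_cong_right[OF states_finite[OF fS] GS])
    show "\<forall>z\<in>states \<rho> S - G. f z = 0"
    proof
      fix z assume z: "z \<in> states \<rho> S - G"
      have "\<not> (\<forall>c. c \<noteq> a \<and> c \<noteq> b \<longrightarrow> x c = z c)"
      proof
        assume h: "\<forall>c. c \<noteq> a \<and> c \<noteq> b \<longrightarrow> x c = z c"
        have "z = g (z a, z b)" using h unfolding g_def by (auto simp: fun_eq_iff)
        moreover have "(z a, z b) \<in> {..\<rho> a} \<times> {..\<rho> b}" using z ab unfolding states_def by auto
        ultimately show False using z unfolding G_def by auto
      qed
      then show "f z = 0" unfolding f_def two_site_op_def by auto
    qed
  qed simp
  also have "\<dots> = sum (f \<circ> g) ({..\<rho> a} \<times> {..\<rho> b})"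
    unfolding G_def
  proof (rule sum.reindex, rule inj_onI)
    fix u v assume "g u = g v"
    then have "g u a = g v a" "g u b = g v b" by auto
    then show "u = v" using ab by (auto simp: g_def prod_eq_iff)
  qed
  also have "\<dots> = (\<Sum>p\<le>\<rho> a. \<Sum>q\<le>\<rho> b. f (g (p, q)))"
    by (simp add: sum.cartesian_product)
  also have "\<dots> = two_site_op a b (dot (\<rho> a) (\<rho> b) M M') x y"
    unfolding f_def g_def two_site_op_def dot_def using ab
    by (simp add: sum_distrib_right)
  finally show ?thesis .
qed


section \<open>Unitarity from YBE\<close>

definition W1 :: "rfam \<Rightarrow> nat \<Rightarrow> nat \<Rightarrow> complex \<Rightarrow> (nat \<times> nat \<Rightarrow> nat \<times> nat \<Rightarrow> complex)" where
  "W1 Rm r s lam = dot r s (Rm r s lam) (flipM (Rm s r (- lam)))"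

definition st3 :: "nat \<Rightarrow> nat \<Rightarrow> nat \<Rightarrow> nat \<Rightarrow> nat" where
  "st3 i j m = (\<lambda>c. if c = 1 then i else if c = 2 then j else if c = 3 then m else 0)"

lemma ybe_W:
  assumes ybe: "YBE Rm" and init: "initial_cond Rm"
    and le: "i \<le> r" "k \<le> r" "j \<le> s" "l \<le> s" "m \<le> r" "m' \<le> r"
  shows "W1 Rm r s lam (i,j) (k,l) * (if m = m' then 1 else 0) =
         W1 Rm s r (- lam) (j,m) (l,m') * (if i = k then 1 else 0)"
proof -
  define \<rho> where "\<rho> = (\<lambda>i::nat. if i = 1 then r else if i = 2 then s else if i = 3 then r else 0)"
  define S where "S = {1,2,3::nat}"
  have fS: "finite S" by (simp add: S_def)
  let ?m = "op_mult \<rho> S"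
  define R12 where "R12 = two_site_op 1 2 (Rm r s lam)"
  define P where "P = two_site_op 1 3 (Rm r r 0)"
  define R23 where "R23 = two_site_op 2 3 (Rm s r (- lam))"
  have y: "op_eq \<rho> S (?m (?m R12 P) R23) (?m (?m R23 P) R12)"
    using ybe[unfolded YBE_def, rule_format, of r s r lam 0 lam] unfolding Let_def
    by (simp add: S_def Rop_def R12_def P_def R23_def \<rho>_def)
  have isP: "isP \<rho> S 1 3 P" unfolding P_def
    by (rule init_isP[OF init]) (auto simp: S_def \<rho>_def)
  have ab: "(1::nat) \<in> S" "(3::nat) \<in> S" "\<rho> 1 = \<rho> 3" by (auto simp: S_def \<rho>_def)
  have sw23: "swp 1 3 R23 = two_site_op 1 2 (flipM (Rm s r (- lam)))"
    unfolding R23_def swp_two_site by (simp add: trn_def two_site_flip[of 2 "Suc 0"])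
  have sw12: "swp 1 3 R12 = two_site_op 2 3 (flipM (Rm r s lam))"
    unfolding R12_def swp_two_site by (simp add: trn_def two_site_flip[of 3 2])
  have L: "op_eq \<rho> S (?m (?m R12 P) R23) (?m (?m R12 (swp 1 3 R23)) P)"
    using P_comm[OF fS isP ab, of R23] by (simp add: op_mult_assoc[OF fS] op_eq_multR)
  have R: "op_eq \<rho> S (?m (?m R23 P) R12) (?m (?m R23 (swp 1 3 R12)) P)"
    using P_comm[OF fS isP ab, of R12] by (simp add: op_mult_assoc[OF fS] op_eq_multR)
  have "op_eq \<rho> S (?m (?m R12 (swp 1 3 R23)) P) (?m (?m R23 (swp 1 3 R12)) P)"
    using L R y by (meson op_eq_sym op_eq_trans)
  then have "op_eq \<rho> S (?m (?m (?m R12 (swp 1 3 R23)) P) P) (?m (?m (?m R23 (swp 1 3 R12)) P) P)"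
    by (rule op_eq_multL)
  moreover have "op_eq \<rho> S (?m (?m (?m X Y) P) P) (?m X Y)" for X Y
  proof -
    have "op_eq \<rho> S (?m (?m (?m X Y) P) P) (?m (?m X Y) (?m P P))" by (simp add: op_mult_assoc[OF fS])
    also have "op_eq \<rho> S \<dots> (?m (?m X Y) op_id)" by (rule op_eq_multR[OF P_P[OF fS isP ab]])
    also have "op_eq \<rho> S \<dots> (?m X Y)" by (rule op_mult_id_right[OF fS])
    finally show ?thesis .
  qed
  ultimately have E: "op_eq \<rho> S (?m R12 (swp 1 3 R23)) (?m R23 (swp 1 3 R12))"
    by (meson op_eq_sym op_eq_trans)
  define x where "x = st3 i j m"
  define y where "y = st3 k l m'"
  have xs: "x \<in> states \<rho> S" and ys: "y \<in> states \<rho> S"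
    using le unfolding x_def y_def st3_def states_def \<rho>_def S_def by auto
  have "?m R12 (swp 1 3 R23) x y = ?m R23 (swp 1 3 R12) x y"
    using E xs ys unfolding op_eq_def by blast
  moreover have "?m R12 (swp 1 3 R23) x y = two_site_op 1 2 (W1 Rm r s lam) x y"
    unfolding sw23 R12_def W1_def
    by (subst two_site_mult[OF fS _ _ _ xs ys]) (auto simp: S_def \<rho>_def)
  moreover have "?m R23 (swp 1 3 R12) x y = two_site_op 2 3 (W1 Rm s r (- lam)) x y"
    unfolding sw12 R23_def W1_def
    by (subst two_site_mult[OF fS _ _ _ xs ys]) (auto simp: S_def \<rho>_def)
  moreover have "(\<forall>c. c \<noteq> 1 \<and> c \<noteq> 2 \<longrightarrow> x c = y c) = (m = m')"
    unfolding x_def y_def st3_def by (rule iffI, drule spec[of _ 3], simp, auto)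
  moreover have "(\<forall>c. c \<noteq> 2 \<and> c \<noteq> 3 \<longrightarrow> x c = y c) = (i = k)"
    unfolding x_def y_def st3_def by (rule iffI, drule spec[of _ 1], simp, auto)
  ultimately show ?thesis
    unfolding two_site_op_def by (simp add: x_def y_def st3_def)
qed


lemma unit_W:
  assumes ybe: "YBE Rm" and init: "initial_cond Rm"
    and le: "i \<le> r" "k \<le> r" "j \<le> s" "l \<le> s"
  shows "W1 Rm r s lam (i,j) (k,l) = (if i = k \<and> j = l then W1 Rm r s lam (0,0) (0,0) else 0)"
proof -
  have 1: "W1 Rm r s lam (i,j) (k,l) = W1 Rm s r (- lam) (j,0) (l,0) * (if i = k then 1 else 0)"
    using ybe_W[OF ybe init le(1,2,3,4), where m=0 and m'=0 and lam=lam] by simp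
  have 2: "W1 Rm s r (- lam) (j,0) (l,0) = W1 Rm r s lam (0,0) (0,0) * (if j = l then 1 else 0)"
    using ybe_W[OF ybe init, where i=j and k=l and j=0 and l=0 and m=0 and m'=0 and r=s and s=r and lam="-lam"] le by simp
  show ?thesis using 1 2 by auto
qed

lemma unitarity:
  assumes ybe: "YBE Rm" and init: "initial_cond Rm" and fS: "finite S"
    and ab: "a \<noteq> b" "a \<in> S" "b \<in> S" and mu: "mu = - lam"
  shows "op_eq \<rho> S (op_mult \<rho> S (Rop Rm \<rho> a b lam) (Rop Rm \<rho> b a mu))
           (smul (W1 Rm (\<rho> a) (\<rho> b) lam (0,0) (0,0)) op_id)"
  unfolding op_eq_def
proof (intro ballI)
  fix x y assume x: "x \<in> states \<rho> S" and y: "y \<in> states \<rho> S"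
  have le: "x a \<le> \<rho> a" "y a \<le> \<rho> a" "x b \<le> \<rho> b" "y b \<le> \<rho> b"
    using x y ab unfolding states_def by auto
  have "op_mult \<rho> S (Rop Rm \<rho> a b lam) (Rop Rm \<rho> b a mu) x y
      = two_site_op a b (W1 Rm (\<rho> a) (\<rho> b) lam) x y"
    unfolding Rop_def two_site_flip[of b a] W1_def mu
    by (rule two_site_mult[OF fS ab x y])
  also have "\<dots> = smul (W1 Rm (\<rho> a) (\<rho> b) lam (0,0) (0,0)) op_id x y"
    unfolding two_site_op_def smul_def op_id_def
    using unit_W[OF ybe init le(1,2,3,4), of lam]
    by (auto simp: fun_eq_iff)
  finally show "op_mult \<rho> S (Rop Rm \<rho> a b lam) (Rop Rm \<rho> b a mu) x y
      = smul (W1 Rm (\<rho> a) (\<rho> b) lam (0,0) (0,0)) op_id x y" .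
qed


section \<open>Auxiliary slot 0\<close>

lemma states_upd0:
  assumes "0 \<notin> S" "w \<in> states \<rho> S" "a \<le> r"
  shows "w(0 := a) \<in> states (\<rho>(0 := r)) (insert 0 S)"
  using assms unfolding states_def by auto

lemma states_res0:
  assumes "0 \<notin> S" "z \<in> states (\<rho>(0 := r)) (insert 0 S)"
  shows "z(0 := 0) \<in> states \<rho> S" "z 0 \<le> r"
  using assms unfolding states_def by (auto split: if_splits)

lemma states_zero0: "0 \<notin> S \<Longrightarrow> w \<in> states \<rho> S \<Longrightarrow> w 0 = 0"
  unfolding states_def by auto

lemma sum_states0:
  assumes fS: "finite S" and S0: "0 \<notin> S"
  shows "sum f (states (\<rho>(0 := r)) (insert 0 S)) = (\<Sum>a\<le>r. \<Sum>w\<in>states \<rho> S. f (w(0 := a)))"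
proof -
  have "(\<Sum>a\<le>r. \<Sum>w\<in>states \<rho> S. f (w(0 := a))) = sum (\<lambda>(a,w). f (w(0 := a))) ({..r} \<times> states \<rho> S)"
    by (rule sum.cartesian_product)
  also have "\<dots> = sum f (states (\<rho>(0 := r)) (insert 0 S))"
  proof (rule sum.reindex_bij_witness[where i="\<lambda>z. (z 0, z(0 := 0))" and j="\<lambda>(a,w). w(0 := a)"])
    fix p assume "p \<in> {..r} \<times> states \<rho> S"
    then obtain a w where p: "p = (a, w)" "a \<le> r" "w \<in> states \<rho> S" by auto
    have w0: "w 0 = 0" using states_zero0[OF S0 p(3)] .
    show "((case p of (a, w) \<Rightarrow> w(0 := a)) 0, (case p of (a, w) \<Rightarrow> w(0 := a))(0 := 0)) = p"
      using p(1) w0 by (simp add: fun_upd_idem)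
    show "(case p of (a, w) \<Rightarrow> w(0 := a)) \<in> states (\<rho>(0 := r)) (insert 0 S)"
      using p states_upd0[OF S0] by simp
    show "f (case p of (a, w) \<Rightarrow> w(0 := a)) = (case p of (a, w) \<Rightarrow> f (w(0 := a)))"
      using p by simp
  next
    fix z assume z: "z \<in> states (\<rho>(0 := r)) (insert 0 S)"
    show "(case (z 0, z(0 := 0)) of (a, w) \<Rightarrow> w(0 := a)) = z" by simp
    show "(z 0, z(0 := 0)) \<in> {..r} \<times> states \<rho> S" using states_res0[OF S0 z] by simp
  qed
  finally show ?thesis by simp
qed

definition ext0 :: "mop \<Rightarrow> mop" where
  "ext0 A = (\<lambda>x y. A (x(0 := 0)) (y(0 := 0)) * (if x 0 = y 0 then 1 else 0))"

lemma ext_two_site_pt: "a \<noteq> 0 \<Longrightarrow> b \<noteq> 0 \<Longrightarrow> ext0 (two_site_op a b M) x y = two_site_op a b M x y"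
  unfolding ext0_def two_site_op_def by (cases "x 0 = y 0") (auto, metis gr0I)

lemma ext_two_site: "a \<noteq> 0 \<Longrightarrow> b \<noteq> 0 \<Longrightarrow> ext0 (two_site_op a b M) = two_site_op a b M"
  using ext_two_site_pt by blast

lemma ext_local_pt: "a \<noteq> 0 \<Longrightarrow> ext0 (local_op a M) x y = local_op a M x y"
  unfolding ext0_def local_op_def by (cases "x 0 = y 0") (auto, metis gr0I)

lemma ext_local: "a \<noteq> 0 \<Longrightarrow> ext0 (local_op a M) = local_op a M"
  using ext_local_pt by blast

lemma ext_id_pt: "ext0 op_id x y = op_id x y"
proof -
  have "(x(0 := 0) = y(0 := 0) \<and> x 0 = y 0) = (x = y)"
    by (metis fun_upd_triv fun_upd_upd)
  then show ?thesis unfolding ext0_def op_id_def by auto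
qed

lemma ext_id: "ext0 op_id = op_id"
  using ext_id_pt by blast


lemma upd0_res: "0 \<notin> S \<Longrightarrow> w \<in> states \<rho> S \<Longrightarrow> (w(0 := a))(0 := 0) = w"
  using states_zero0[of S w \<rho>] by (simp add: fun_upd_idem)

lemma sum_delta_le: "(x0::nat) \<le> r \<Longrightarrow> (\<Sum>a\<le>r. (if x0 = a \<and> a = y0 then 1 else 0) * (K::complex)) = (if x0 = y0 then 1 else 0) * K"
proof -
  assume "x0 \<le> r"
  have "(\<Sum>a\<le>r. (if x0 = a \<and> a = y0 then 1 else 0) * K) = (\<Sum>a\<le>r. if a = x0 then (if x0 = y0 then K else 0) else 0)"
    by (intro sum.cong) auto
  also have "\<dots> = (if x0 = y0 then K else 0)" using \<open>x0 \<le> r\<close> by (simp add: sum.delta')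
  finally show ?thesis by simp
qed

lemma ext_mult:
  assumes fS: "finite S" and S0: "0 \<notin> S"
    and x: "x \<in> states (\<rho>(0 := r)) (insert 0 S)" and y: "y \<in> states (\<rho>(0 := r)) (insert 0 S)"
  shows "op_mult (\<rho>(0 := r)) (insert 0 S) (ext0 A) (ext0 B) x y = ext0 (op_mult \<rho> S A B) x y"
proof -
  have x0: "x 0 \<le> r" using states_res0[OF S0 x] by simp
  have "op_mult (\<rho>(0 := r)) (insert 0 S) (ext0 A) (ext0 B) x y =
     (\<Sum>a\<le>r. \<Sum>w\<in>states \<rho> S. ext0 A x (w(0 := a)) * ext0 B (w(0 := a)) y)"
    unfolding op_mult_def by (rule sum_states0[OF fS S0])
  also have "\<dots> = (\<Sum>a\<le>r. (if x 0 = a \<and> a = y 0 then 1 else 0) * (\<Sum>w\<in>states \<rho> S. A (x(0:=0)) w * B w (y(0:=0))))"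
  proof (intro sum.cong refl)
    fix a
    show "(\<Sum>w\<in>states \<rho> S. ext0 A x (w(0 := a)) * ext0 B (w(0 := a)) y) =
        (if x 0 = a \<and> a = y 0 then 1 else 0) * (\<Sum>w\<in>states \<rho> S. A (x(0:=0)) w * B w (y(0:=0)))"
      unfolding sum_distrib_left
    proof (intro sum.cong refl)
      fix w assume w: "w \<in> states \<rho> S"
      show "ext0 A x (w(0 := a)) * ext0 B (w(0 := a)) y =
          (if x 0 = a \<and> a = y 0 then 1 else 0) * (A (x(0:=0)) w * B w (y(0:=0)))"
        unfolding ext0_def upd0_res[OF S0 w] by simp
    qed
  qed
  also have "\<dots> = ext0 (op_mult \<rho> S A B) x y"
    unfolding ext0_def op_mult_def by (subst sum_delta_le[OF x0]) simp
  finally show ?thesis .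
qed

lemma ext_cong:
  assumes S0: "0 \<notin> S" and "op_eq \<rho> S A B"
  shows "op_eq (\<rho>(0 := r)) (insert 0 S) (ext0 A) (ext0 B)"
  using assms states_res0[OF S0] unfolding op_eq_def ext0_def by simp

lemma ext_prod:
  assumes fS: "finite S" and S0: "0 \<notin> S"
  shows "op_eq (\<rho>(0 := r)) (insert 0 S) (op_prod (\<rho>(0 := r)) (insert 0 S) (map ext0 xs)) (ext0 (op_prod \<rho> S xs))"
proof (induction xs)
  case Nil then show ?case by (simp add: ext_id)
next
  case (Cons x xs)
  have "op_eq (\<rho>(0 := r)) (insert 0 S) (op_prod (\<rho>(0 := r)) (insert 0 S) (map ext0 (x # xs)))
     (op_mult (\<rho>(0 := r)) (insert 0 S) (ext0 x) (ext0 (op_prod \<rho> S xs)))"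
    using Cons by (simp only: list.map op_prod_Cons op_eq_multR)
  also have "op_eq (\<rho>(0 := r)) (insert 0 S) \<dots> (ext0 (op_prod \<rho> S (x # xs)))"
    unfolding op_eq_def using ext_mult[OF fS S0] by simp
  finally show ?case .
qed

lemma tr_cong:
  assumes S0: "0 \<notin> S" and "op_eq (\<rho>(0 := r)) (insert 0 S) Z Z'"
  shows "op_eq \<rho> S (ptrace0 r Z) (ptrace0 r Z')"
  using assms states_upd0[OF S0] unfolding op_eq_def ptrace0_def by (simp add: atMost_iff)

lemma tr_left:
  assumes fS: "finite S" and S0: "0 \<notin> S" and x: "x \<in> states \<rho> S"
  shows "ptrace0 r (op_mult (\<rho>(0 := r)) (insert 0 S) (ext0 X) Z) x y = op_mult \<rho> S X (ptrace0 r Z) x y"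
proof -
  have x0: "x 0 = 0" by (rule states_zero0[OF S0 x])
  have "ptrace0 r (op_mult (\<rho>(0 := r)) (insert 0 S) (ext0 X) Z) x y =
     (\<Sum>a\<le>r. \<Sum>b\<le>r. \<Sum>w\<in>states \<rho> S. ext0 X (x(0:=a)) (w(0:=b)) * Z (w(0:=b)) (y(0:=a)))"
    unfolding ptrace0_def op_mult_def by (simp add: sum_states0[OF fS S0])
  also have "\<dots> = (\<Sum>a\<le>r. \<Sum>b\<le>r. if b = a then (\<Sum>w\<in>states \<rho> S. X x w * Z (w(0:=a)) (y(0:=a))) else 0)"
  proof (intro sum.cong refl)
    fix a b
    show "(\<Sum>w\<in>states \<rho> S. ext0 X (x(0:=a)) (w(0:=b)) * Z (w(0:=b)) (y(0:=a))) =
      (if b = a then (\<Sum>w\<in>states \<rho> S. X x w * Z (w(0:=a)) (y(0:=a))) else 0)"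
      using upd0_res[OF S0] upd0_res[OF S0 x] unfolding ext0_def by (auto intro!: sum.cong)
  qed
  also have "\<dots> = (\<Sum>a\<le>r. \<Sum>w\<in>states \<rho> S. X x w * Z (w(0:=a)) (y(0:=a)))"
    by (simp add: sum.delta)
  also have "\<dots> = op_mult \<rho> S X (ptrace0 r Z) x y"
    unfolding op_mult_def ptrace0_def sum_distrib_left by (rule sum.swap)
  finally show ?thesis .
qed

lemma tr_right:
  assumes fS: "finite S" and S0: "0 \<notin> S" and y: "y \<in> states \<rho> S"
  shows "ptrace0 r (op_mult (\<rho>(0 := r)) (insert 0 S) Z (ext0 Y)) x y = op_mult \<rho> S (ptrace0 r Z) Y x y"
proof -
  have "ptrace0 r (op_mult (\<rho>(0 := r)) (insert 0 S) Z (ext0 Y)) x y =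
     (\<Sum>a\<le>r. \<Sum>b\<le>r. \<Sum>w\<in>states \<rho> S. Z (x(0:=a)) (w(0:=b)) * ext0 Y (w(0:=b)) (y(0:=a)))"
    unfolding ptrace0_def op_mult_def by (simp add: sum_states0[OF fS S0])
  also have "\<dots> = (\<Sum>a\<le>r. \<Sum>b\<le>r. if b = a then (\<Sum>w\<in>states \<rho> S. Z (x(0:=a)) (w(0:=a)) * Y w y) else 0)"
  proof (intro sum.cong refl)
    fix a b
    show "(\<Sum>w\<in>states \<rho> S. Z (x(0:=a)) (w(0:=b)) * ext0 Y (w(0:=b)) (y(0:=a))) =
      (if b = a then (\<Sum>w\<in>states \<rho> S. Z (x(0:=a)) (w(0:=a)) * Y w y) else 0)"
      using upd0_res[OF S0] upd0_res[OF S0 y] unfolding ext0_def by (auto intro!: sum.cong)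
  qed
  also have "\<dots> = (\<Sum>a\<le>r. \<Sum>w\<in>states \<rho> S. Z (x(0:=a)) (w(0:=a)) * Y w y)"
    by (simp add: sum.delta)
  also have "\<dots> = op_mult \<rho> S (ptrace0 r Z) Y x y"
    unfolding op_mult_def ptrace0_def sum_distrib_right by (rule sum.swap)
  finally show ?thesis .
qed

lemma tr_P:
  assumes S0: "0 \<notin> S" and P: "isP (\<rho>(0 := r)) (insert 0 S) 0 i P" and i: "i \<in> S" "\<rho> i = r"
  shows "op_eq \<rho> S (ptrace0 r P) op_id"
  unfolding op_eq_def
proof (intro ballI)
  fix x y assume x: "x \<in> states \<rho> S" and y: "y \<in> states \<rho> S"
  have i0: "i \<noteq> 0" using i S0 by metis
  have yi: "y i \<le> r" using y i unfolding states_def by auto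
  have x0: "x 0 = 0" and y0: "y 0 = 0" using states_zero0[OF S0] x y by auto
  have "ptrace0 r P x y = (\<Sum>a\<le>r. if y(0 := a) = swv 0 i (x(0 := a)) then 1 else 0)"
    unfolding ptrace0_def using P states_upd0[OF S0 x] states_upd0[OF S0 y] unfolding isP_def
    by (intro sum.cong refl) auto
  also have "\<dots> = (\<Sum>a\<le>r. if a = y i then (if x = y then 1 else 0) else 0)"
  proof (intro sum.cong refl)
    fix a
    have "(y(0 := a) = swv 0 i (x(0 := a))) = (a = y i \<and> x = y)"
      using i0 x0 y0 unfolding swv_def fun_eq_iff by (metis fun_upd_apply)
    then show "(if y(0 := a) = swv 0 i (x(0 := a)) then 1 else 0) = (if a = y i then (if x = y then 1 else 0) else (0::complex))"
      by auto
  qed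
  also have "\<dots> = op_id x y" using yi by (simp add: sum.delta' op_id_def)
  finally show "ptrace0 r P x y = op_id x y" .
qed


lemma op_prod_app_congR:
  assumes fS: "finite S" and "op_eq \<rho> S (op_prod \<rho> S ys) (op_prod \<rho> S ys')"
  shows "op_eq \<rho> S (op_prod \<rho> S (xs @ ys)) (op_prod \<rho> S (xs @ ys'))"
  by (meson assms op_eq_multR op_eq_sym op_eq_trans op_prod_append)

lemma op_prod_app_congL:
  assumes fS: "finite S" and "op_eq \<rho> S (op_prod \<rho> S xs) (op_prod \<rho> S xs')"
  shows "op_eq \<rho> S (op_prod \<rho> S (xs @ ys)) (op_prod \<rho> S (xs' @ ys))"
  by (meson assms op_eq_multL op_eq_sym op_eq_trans op_prod_append)

lemma P_move_right:
  assumes fS: "finite S" and P: "isP \<rho> S a b P" and ab: "a \<in> S" "b \<in> S" "\<rho> a = \<rho> b"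
  shows "op_eq \<rho> S (op_prod \<rho> S (P # ys)) (op_prod \<rho> S (map (swp a b) ys @ [P]))"
proof -
  have "op_eq \<rho> S (op_prod \<rho> S (P # ys)) (op_mult \<rho> S (swp a b (op_prod \<rho> S ys)) P)"
    using P_comm[OF assms] by simp
  also have "swp a b (op_prod \<rho> S ys) = op_prod \<rho> S (map (swp a b) ys)"
    by (rule swp_prod[OF fS ab])
  also have "op_eq \<rho> S (op_mult \<rho> S (op_prod \<rho> S (map (swp a b) ys)) P) (op_mult \<rho> S (op_prod \<rho> S (map (swp a b) ys)) (op_prod \<rho> S [P]))"
    by (rule op_eq_multR) (use op_mult_id_right[OF fS] in \<open>simp add: op_eq_sym\<close>)
  also have "op_eq \<rho> S \<dots> (op_prod \<rho> S (map (swp a b) ys @ [P]))"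
    by (rule op_eq_sym[OF op_prod_append[OF fS]])
  finally show ?thesis .
qed

lemma swp_swp[simp]: "swp a b (swp a b A) = A"
  by (simp add: swp_def)

lemma P_move_left:
  assumes fS: "finite S" and P: "isP \<rho> S a b P" and ab: "a \<in> S" "b \<in> S" "\<rho> a = \<rho> b"
  shows "op_eq \<rho> S (op_prod \<rho> S (ys @ [P])) (op_prod \<rho> S (P # map (swp a b) ys))"
proof -
  have "op_eq \<rho> S (op_prod \<rho> S (P # map (swp a b) ys)) (op_prod \<rho> S (map (swp a b) (map (swp a b) ys) @ [P]))"
    by (rule P_move_right[OF assms])
  then show ?thesis by (simp add: comp_def op_eq_sym)
qed



lemma upt_split3:
  assumes "1 \<le> i" "i \<le> N"
  shows "rev [1..<Suc N] = rev [Suc i..<Suc N] @ i # rev [1..<i]"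
proof -
  have "[1..<Suc N] = [1..<i] @ [i..<Suc N]"
    using assms upt_add_eq_append[of 1 i "Suc N - i"] by simp
  also have "[i..<Suc N] = i # [Suc i..<Suc N]"
    using assms by (simp add: upt_conv_Cons)
  finally show ?thesis by simp
qed

lemma loc_Rop: "loc {a,b} (Rop Rm \<rho> a b lam)"
  unfolding Rop_def by (rule loc_two_site)

lemma trace_formula:
  assumes init: "initial_cond Rm" and i: "1 \<le> i" "i \<le> N"
  shows "op_eq \<rho> {1..N} (ptrace0 (\<rho> i) (op_mult (\<rho>(0 := \<rho> i)) {0..N} (local_op 0 E) (monodromy Rm \<rho> N \<xi> (\<rho> i) (\<xi> i))))
     (op_prod \<rho> {1..N} (map (\<lambda>j. Rop Rm \<rho> i j (\<xi> i - \<xi> j)) (rev [1..<i]) @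
        local_op i E # map (\<lambda>j. Rop Rm \<rho> i j (\<xi> i - \<xi> j)) (rev [Suc i..<Suc N])))"
proof -
  let ?r = "\<rho> i"
  let ?S = "{1..N}"
  let ?\<rho>' = "\<rho>(0 := \<rho> i)"
  let ?S' = "insert 0 {1..N}"
  let ?pr = "op_prod ?\<rho>' ?S'"
  let ?m = "op_mult ?\<rho>' ?S'"
  have S'eq: "{0..N} = ?S'" by auto
  have fS: "finite ?S" "finite ?S'" by auto
  have S0: "0 \<notin> ?S" by auto
  have iS: "i \<in> ?S" using i by auto
  have i0: "i \<noteq> 0" using i by auto
  define f0 where "f0 j = Rop Rm ?\<rho>' 0 j (\<xi> i - \<xi> j)" for j
  define g where "g j = Rop Rm \<rho> i j (\<xi> i - \<xi> j)" for j
  define P where "P = f0 i"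
  define Ll where "Ll = rev [1..<i]"
  define Lr where "Lr = rev [Suc i..<Suc N]"
  define E0 where "E0 = local_op 0 E"
  define Ei where "Ei = local_op i E"
  have P_eq: "P = two_site_op 0 i (Rm (\<rho> i) (\<rho> i) 0)"
    using i0 by (simp add: P_def f0_def Rop_def)
  have isP: "isP ?\<rho>' ?S' 0 i P" unfolding P_eq
    by (rule init_isP[OF init]) (use i0 iS in auto)
  have ab: "0 \<in> ?S'" "i \<in> ?S'" "?\<rho>' 0 = ?\<rho>' i" using iS i0 by auto
  have mono: "monodromy Rm \<rho> N \<xi> (\<rho> i) (\<xi> i) = ?pr (map f0 Lr @ P # map f0 Ll)"
    unfolding monodromy_def S'eq upt_split3[OF i] f0_def P_def Ll_def Lr_def by simp
  have Ll_set: "j \<in> set Ll \<Longrightarrow> 1 \<le> j \<and> j < i" for j by (auto simp: Ll_def)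
  have Lr_set: "j \<in> set Lr \<Longrightarrow> i < j \<and> j \<le> N" for j by (auto simp: Lr_def)
  have swf: "map (swp 0 i) (map f0 Ll) = map g Ll"
  proof -
    have "swp 0 i (f0 j) = g j" if "j \<in> set Ll" for j
      using Ll_set[OF that] i0
      by (simp add: f0_def g_def Rop_def swp_two_site trn_def)
    then show ?thesis by simp
  qed
  have swf2: "map (swp 0 i) (E0 # map f0 Lr) = Ei # map g Lr"
  proof -
    have "swp 0 i (f0 j) = g j" if "j \<in> set Lr" for j
      using Lr_set[OF that] i0
      by (simp add: f0_def g_def Rop_def swp_two_site trn_def)
    then show ?thesis by (simp add: E0_def Ei_def swp_local trn_def)
  qed
  have comm1: "comm ?\<rho>' ?S' x y" if xin: "x \<in> set (E0 # map f0 Lr)" and yin: "y \<in> set (map g Ll)" for x y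
  proof -
    obtain j' where j': "j' \<in> set Ll" "y = g j'" using yin by auto
    have ly: "loc {i, j'} y" unfolding j' g_def by (rule loc_Rop)
    show ?thesis
    proof (cases "x = E0")
      case True
      show ?thesis unfolding True E0_def
        by (rule loc_comm[OF fS(2) loc_local ly]) (use i0 Ll_set[OF j'(1)] in auto)
    next
      case False
      then obtain j where j: "j \<in> set Lr" "x = f0 j" using xin by auto
      show ?thesis unfolding j f0_def
        by (rule loc_comm[OF fS(2) loc_Rop ly]) (use i0 Ll_set[OF j'(1)] Lr_set[OF j(1)] in auto)
    qed
  qed
  have ext_g: "map ext0 (map g xs) = map g xs" if "\<forall>j\<in>set xs. j \<noteq> 0" for xs
    using that i0 by (auto simp: g_def Rop_def ext_two_site)
  have ext_Ei: "ext0 Ei = Ei" using i0 by (simp add: Ei_def ext_local)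
  define X where "X = op_prod \<rho> ?S (map g Ll)"
  define Y where "Y = op_prod \<rho> ?S (Ei # map g Lr)"
  have chain: "op_eq ?\<rho>' ?S' (?m E0 (monodromy Rm \<rho> N \<xi> (\<rho> i) (\<xi> i)))
                (?m (ext0 X) (?m P (ext0 Y)))"
  proof -
    have "op_eq ?\<rho>' ?S' (?m E0 (monodromy Rm \<rho> N \<xi> (\<rho> i) (\<xi> i))) (?pr ((E0 # map f0 Lr) @ P # map f0 Ll))"
      unfolding mono by (simp only: append_Cons op_prod_Cons op_eq_refl)
    also have "op_eq ?\<rho>' ?S' \<dots> (?pr ((E0 # map f0 Lr) @ map g Ll @ [P]))"
      by (rule op_prod_app_congR[OF fS(2)]) (use P_move_right[OF fS(2) isP ab, of "map f0 Ll"] in \<open>unfold swf\<close>)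
    also have "op_eq ?\<rho>' ?S' \<dots> (?pr (((E0 # map f0 Lr) @ map g Ll) @ [P]))" by (simp only: append_assoc op_eq_refl)
    also have "op_eq ?\<rho>' ?S' \<dots> (?pr ((map g Ll @ (E0 # map f0 Lr)) @ [P]))"
      by (rule op_prod_app_congL[OF fS(2)]) (rule op_prod_swap[OF fS(2) comm1])
    also have "op_eq ?\<rho>' ?S' \<dots> (?pr (map g Ll @ ((E0 # map f0 Lr) @ [P])))" by (simp only: append_assoc op_eq_refl)
    also have "op_eq ?\<rho>' ?S' \<dots> (?pr (map g Ll @ (P # Ei # map g Lr)))"
      by (rule op_prod_app_congR[OF fS(2)]) (use P_move_left[OF fS(2) isP ab, of "E0 # map f0 Lr"] in \<open>unfold swf2\<close>)
    also have "op_eq ?\<rho>' ?S' \<dots> (?m (?pr (map g Ll)) (?m P (?pr (Ei # map g Lr))))"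
      using op_prod_append[OF fS(2), where xs="map g Ll" and ys="P # Ei # map g Lr" and \<rho>="?\<rho>'"] by (simp only: op_prod_Cons)
    also have "op_eq ?\<rho>' ?S' \<dots> (?m (ext0 X) (?m P (ext0 Y)))"
    proof (rule op_eq_mult)
      have e1: "map ext0 (map g Ll) = map g Ll" using ext_g Ll_set by fastforce
      show "op_eq ?\<rho>' ?S' (?pr (map g Ll)) (ext0 X)"
        using ext_prod[OF fS(1) S0, where r="?r" and xs="map g Ll" and \<rho>=\<rho>] unfolding X_def e1 .
      have e2: "map ext0 (Ei # map g Lr) = Ei # map g Lr" using ext_g[of Lr] Lr_set ext_Ei by fastforce
      have "op_eq ?\<rho>' ?S' (?pr (Ei # map g Lr)) (ext0 Y)"
        using ext_prod[OF fS(1) S0, where r="?r" and xs="Ei # map g Lr" and \<rho>=\<rho>] unfolding Y_def e2 .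
      then show "op_eq ?\<rho>' ?S' (?m P (?pr (Ei # map g Lr))) (?m P (ext0 Y))"
        by (rule op_eq_multR)
    qed
    finally show ?thesis .
  qed
  have "op_eq \<rho> ?S (ptrace0 ?r (?m E0 (monodromy Rm \<rho> N \<xi> (\<rho> i) (\<xi> i)))) (ptrace0 ?r (?m (ext0 X) (?m P (ext0 Y))))"
    by (rule tr_cong[OF S0 chain])
  also have "op_eq \<rho> ?S \<dots> (op_mult \<rho> ?S X (op_mult \<rho> ?S (ptrace0 ?r P) Y))"
    unfolding op_eq_def
  proof (intro ballI)
    fix x y assume x: "x \<in> states \<rho> ?S" and y: "y \<in> states \<rho> ?S"
    have "ptrace0 ?r (?m (ext0 X) (?m P (ext0 Y))) x y = op_mult \<rho> ?S X (ptrace0 ?r (?m P (ext0 Y))) x y"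
      by (rule tr_left[OF fS(1) S0 x])
    also have "\<dots> = op_mult \<rho> ?S X (op_mult \<rho> ?S (ptrace0 ?r P) Y) x y"
      unfolding op_mult_def[of \<rho> ?S X]
      by (intro sum.cong refl arg_cong2[where f="(*)"] tr_right[OF fS(1) S0 y])
    finally show "ptrace0 ?r (?m (ext0 X) (?m P (ext0 Y))) x y = op_mult \<rho> ?S X (op_mult \<rho> ?S (ptrace0 ?r P) Y) x y" .
  qed
  also have "op_eq \<rho> ?S \<dots> (op_mult \<rho> ?S X (op_mult \<rho> ?S op_id Y))"
    by (intro op_eq_multR op_eq_multL tr_P[OF S0 isP iS refl])
  also have "op_eq \<rho> ?S \<dots> (op_mult \<rho> ?S X Y)"
    by (intro op_eq_multR op_mult_id_left fS)
  also have "op_eq \<rho> ?S \<dots> (op_prod \<rho> ?S (map g Ll @ Ei # map g Lr))"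
    unfolding X_def Y_def by (rule op_eq_sym[OF op_prod_append[OF fS(1)]])
  finally have calc: "op_eq \<rho> ?S (ptrace0 ?r (?m E0 (monodromy Rm \<rho> N \<xi> (\<rho> i) (\<xi> i))))
     (op_prod \<rho> ?S (map g Ll @ Ei # map g Lr))" .
  have g_eq: "g = (\<lambda>j. Rop Rm \<rho> i j (\<xi> i - \<xi> j))" by (rule ext) (simp add: g_def)
  show ?thesis using calc unfolding g_eq Ll_def Lr_def E0_def Ei_def S'eq[symmetric] .
qed


definition delta :: "nat \<Rightarrow> nat \<Rightarrow> complex" where
  "delta a b = (if a = b then 1 else 0)"

lemma local_delta: "local_op a delta = op_id"
proof (intro ext)
  fix x y :: "nat \<Rightarrow> nat"
  have "(x a = y a \<and> (\<forall>c. c \<noteq> a \<longrightarrow> x c = y c)) = (x = y)" by (auto simp: fun_eq_iff)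
  then show "local_op a delta x y = op_id x y"
    unfolding local_op_def delta_def op_id_def by auto
qed

lemma op_prod_drop_id:
  assumes fS: "finite S"
  shows "op_eq \<rho> S (op_prod \<rho> S (xs @ op_id # ys)) (op_prod \<rho> S (xs @ ys))"
  by (rule op_prod_app_congR[OF fS]) (simp add: op_mult_id_left[OF fS])

lemma transfer_formula:
  assumes init: "initial_cond Rm" and i: "1 \<le> i" "i \<le> N"
  shows "op_eq \<rho> {1..N} (transfer Rm \<rho> N \<xi> (\<rho> i) (\<xi> i))
     (op_prod \<rho> {1..N} (map (\<lambda>j. Rop Rm \<rho> i j (\<xi> i - \<xi> j)) (rev [1..<i]) @
        map (\<lambda>j. Rop Rm \<rho> i j (\<xi> i - \<xi> j)) (rev [Suc i..<Suc N])))"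
proof -
  have S'eq: "{0..N} = insert 0 {1..N}" by auto
  have S0: "(0::nat) \<notin> {1..N}" by simp
  have "op_eq (\<rho>(0 := \<rho> i)) (insert 0 {1..N}) (monodromy Rm \<rho> N \<xi> (\<rho> i) (\<xi> i))
        (op_mult (\<rho>(0 := \<rho> i)) (insert 0 {1..N}) op_id (monodromy Rm \<rho> N \<xi> (\<rho> i) (\<xi> i)))"
    by (rule op_eq_sym[OF op_mult_id_left]) simp
  then have "op_eq \<rho> {1..N} (transfer Rm \<rho> N \<xi> (\<rho> i) (\<xi> i))
      (ptrace0 (\<rho> i) (op_mult (\<rho>(0 := \<rho> i)) {0..N} (local_op 0 delta) (monodromy Rm \<rho> N \<xi> (\<rho> i) (\<xi> i))))"
    unfolding transfer_def local_delta S'eq by (rule tr_cong[OF S0])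
  also have "op_eq \<rho> {1..N} \<dots> (op_prod \<rho> {1..N} (map (\<lambda>j. Rop Rm \<rho> i j (\<xi> i - \<xi> j)) (rev [1..<i]) @
        local_op i delta # map (\<lambda>j. Rop Rm \<rho> i j (\<xi> i - \<xi> j)) (rev [Suc i..<Suc N])))"
    by (rule trace_formula[OF init i])
  also have "op_eq \<rho> {1..N} \<dots> (op_prod \<rho> {1..N} (map (\<lambda>j. Rop Rm \<rho> i j (\<xi> i - \<xi> j)) (rev [1..<i]) @
        map (\<lambda>j. Rop Rm \<rho> i j (\<xi> i - \<xi> j)) (rev [Suc i..<Suc N])))"
    unfolding local_delta by (rule op_prod_drop_id) simp
  finally show ?thesis .
qed

lemma op_prod_cancel:
  assumes fS: "finite S" and XY: "op_eq \<rho> S (op_mult \<rho> S X Y) (smul c op_id)"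
  shows "op_eq \<rho> S (op_prod \<rho> S (xs @ X # Y # ys)) (smul c (op_prod \<rho> S (xs @ ys)))"
proof -
  have "op_eq \<rho> S (op_prod \<rho> S (X # Y # ys)) (op_mult \<rho> S (op_mult \<rho> S X Y) (op_prod \<rho> S ys))"
    by (simp add: op_mult_assoc[OF fS])
  also have "op_eq \<rho> S \<dots> (op_mult \<rho> S (smul c op_id) (op_prod \<rho> S ys))"
    by (rule op_eq_multL[OF XY])
  also have "op_eq \<rho> S \<dots> (smul c (op_prod \<rho> S ys))"
    unfolding smul_multL by (rule smul_cong[OF op_mult_id_left[OF fS]])
  finally have 1: "op_eq \<rho> S (op_prod \<rho> S (X # Y # ys)) (smul c (op_prod \<rho> S ys))" .
  have "op_eq \<rho> S (op_prod \<rho> S (xs @ X # Y # ys)) (op_mult \<rho> S (op_prod \<rho> S xs) (op_prod \<rho> S (X # Y # ys)))"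
    by (rule op_prod_append[OF fS])
  also have "op_eq \<rho> S \<dots> (op_mult \<rho> S (op_prod \<rho> S xs) (smul c (op_prod \<rho> S ys)))"
    by (rule op_eq_multR[OF 1])
  also have "op_eq \<rho> S \<dots> (smul c (op_prod \<rho> S (xs @ ys)))"
    unfolding smul_multR by (rule smul_cong[OF op_eq_sym[OF op_prod_append[OF fS]]])
  finally show ?thesis .
qed

lemma cancel_chain:
  assumes fS: "finite S"
    and XY: "\<And>i. 1 \<le> i \<Longrightarrow> i \<le> m \<Longrightarrow> \<exists>c. op_eq \<rho> S (op_mult \<rho> S (X i) (Y i)) (smul c op_id)"
    and YB: "\<And>k i b. 1 \<le> k \<Longrightarrow> k < i \<Longrightarrow> i \<le> m \<Longrightarrow> b \<in> set (B i) \<Longrightarrow> comm \<rho> S (Y k) b"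
  shows "\<exists>c. op_eq \<rho> S (op_prod \<rho> S (concat (map (\<lambda>i. B i @ [X i]) [1..<Suc m]) @ map Y (rev [1..<Suc m])))
                 (smul c (op_prod \<rho> S (concat (map B [1..<Suc m]))))"
  using XY YB
proof (induction m)
  case 0
  show ?case by (rule exI[of _ 1]) (simp add: smul_one)
next
  case (Suc m)
  let ?pre = "concat (map (\<lambda>i. B i @ [X i]) [1..<Suc m])"
  let ?Ys = "map Y (rev [1..<Suc m])"
  obtain c where c: "op_eq \<rho> S (op_mult \<rho> S (X (Suc m)) (Y (Suc m))) (smul c op_id)"
    using Suc.prems(1)[of "Suc m"] by auto
  obtain c' where c': "op_eq \<rho> S (op_prod \<rho> S (?pre @ ?Ys)) (smul c' (op_prod \<rho> S (concat (map B [1..<Suc m]))))"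
    using Suc.IH Suc.prems by (metis le_SucI less_Suc_eq_le)
  have list: "concat (map (\<lambda>i. B i @ [X i]) [1..<Suc (Suc m)]) @ map Y (rev [1..<Suc (Suc m)])
      = (?pre @ B (Suc m)) @ X (Suc m) # Y (Suc m) # ?Ys" by simp
  have "op_eq \<rho> S (op_prod \<rho> S ((?pre @ B (Suc m)) @ X (Suc m) # Y (Suc m) # ?Ys))
        (smul c (op_prod \<rho> S ((?pre @ B (Suc m)) @ ?Ys)))"
    by (rule op_prod_cancel[OF fS c])
  also have "op_eq \<rho> S \<dots> (smul c (op_prod \<rho> S (?pre @ ?Ys @ B (Suc m))))"
  proof (rule smul_cong)
    have "op_eq \<rho> S (op_prod \<rho> S (B (Suc m) @ ?Ys)) (op_prod \<rho> S (?Ys @ B (Suc m)))"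
    proof (rule op_prod_swap[OF fS])
      fix b y assume b: "b \<in> set (B (Suc m))" and y: "y \<in> set ?Ys"
      then obtain k where k: "1 \<le> k" "k < Suc m" "y = Y k" by auto
      show "comm \<rho> S b y" unfolding k(3) by (rule comm_sym[OF Suc.prems(2)[OF k(1) k(2) le_refl b]])
    qed
    then show "op_eq \<rho> S (op_prod \<rho> S ((?pre @ B (Suc m)) @ ?Ys)) (op_prod \<rho> S (?pre @ ?Ys @ B (Suc m)))"
      unfolding append_assoc by (rule op_prod_app_congR[OF fS])
  qed
  also have "op_eq \<rho> S \<dots> (smul c (op_mult \<rho> S (op_prod \<rho> S (?pre @ ?Ys)) (op_prod \<rho> S (B (Suc m)))))"
    by (rule smul_cong) (use op_prod_append[OF fS, where xs="?pre @ ?Ys" and ys="B (Suc m)" and \<rho>=\<rho>] in simp)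
  also have "op_eq \<rho> S \<dots> (smul c (op_mult \<rho> S (smul c' (op_prod \<rho> S (concat (map B [1..<Suc m])))) (op_prod \<rho> S (B (Suc m)))))"
    by (rule smul_cong[OF op_eq_multL[OF c']])
  also have "op_eq \<rho> S \<dots> (smul (c * c') (op_prod \<rho> S (concat (map B [1..<Suc (Suc m)]))))"
    unfolding smul_multL smul_smul
    by (rule smul_cong) (use op_prod_append[OF fS, where xs="concat (map B [1..<Suc m])" and ys="B (Suc m)" and \<rho>=\<rho>] in \<open>simp add: op_eq_sym\<close>)
  finally show ?case unfolding list by blast
qed


definition gR :: "rfam \<Rightarrow> (nat \<Rightarrow> nat) \<Rightarrow> (nat \<Rightarrow> complex) \<Rightarrow> nat \<Rightarrow> nat \<Rightarrow> mop" where
  "gR Rm \<rho> \<xi> i j = Rop Rm \<rho> i j (\<xi> i - \<xi> j)"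

definition Lft :: "rfam \<Rightarrow> (nat \<Rightarrow> nat) \<Rightarrow> (nat \<Rightarrow> complex) \<Rightarrow> nat \<Rightarrow> mop list" where
  "Lft Rm \<rho> \<xi> i = map (gR Rm \<rho> \<xi> i) (rev [1..<i])"

definition RgtP :: "rfam \<Rightarrow> (nat \<Rightarrow> nat) \<Rightarrow> (nat \<Rightarrow> complex) \<Rightarrow> nat \<Rightarrow> nat \<Rightarrow> nat \<Rightarrow> mop list" where
  "RgtP Rm \<rho> \<xi> N i m = map (gR Rm \<rho> \<xi> i) (rev [Suc m..<Suc N])"

definition Fl :: "rfam \<Rightarrow> (nat \<Rightarrow> nat) \<Rightarrow> (nat \<Rightarrow> complex) \<Rightarrow> nat \<Rightarrow> nat \<Rightarrow> mop list" where
  "Fl Rm \<rho> \<xi> N n = concat (map (\<lambda>i. RgtP Rm \<rho> \<xi> N i n) [1..<n])"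

definition tr :: "rfam \<Rightarrow> (nat \<Rightarrow> nat) \<Rightarrow> nat \<Rightarrow> (nat \<Rightarrow> complex) \<Rightarrow> nat \<Rightarrow> mop" where
  "tr Rm \<rho> N \<xi> i = transfer Rm \<rho> N \<xi> (\<rho> i) (\<xi> i)"

lemma gR_eq: "(\<lambda>j. Rop Rm \<rho> i j (\<xi> i - \<xi> j)) = gR Rm \<rho> \<xi> i"
  by (rule ext) (simp add: gR_def)

lemma transfer_formula':
  assumes init: "initial_cond Rm" and i: "1 \<le> i" "i \<le> N"
  shows "op_eq \<rho> {1..N} (tr Rm \<rho> N \<xi> i) (op_prod \<rho> {1..N} (Lft Rm \<rho> \<xi> i @ RgtP Rm \<rho> \<xi> N i i))"
  using transfer_formula[OF init i, of \<rho> \<xi>] unfolding tr_def Lft_def RgtP_def gR_eq .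

lemma trace_formula':
  assumes init: "initial_cond Rm" and i: "1 \<le> i" "i \<le> N"
  shows "op_eq \<rho> {1..N} (ptrace0 (\<rho> i) (op_mult (\<rho>(0 := \<rho> i)) {0..N} (local_op 0 E) (monodromy Rm \<rho> N \<xi> (\<rho> i) (\<xi> i))))
     (op_prod \<rho> {1..N} (Lft Rm \<rho> \<xi> i @ local_op i E # RgtP Rm \<rho> \<xi> N i i))"
  using trace_formula[OF init i, of \<rho> E \<xi>] unfolding Lft_def RgtP_def gR_eq .

lemma loc_gR: "loc {i, j} (gR Rm \<rho> \<xi> i j)"
  unfolding gR_def by (rule loc_Rop)

lemma Q_claim:
  assumes ybe: "YBE Rm" and init: "initial_cond Rm"
  shows "1 \<le> n \<Longrightarrow> n \<le> N \<Longrightarrow> \<exists>c. op_eq \<rho> {1..N}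
    (op_mult \<rho> {1..N} (op_prod \<rho> {1..N} (map (tr Rm \<rho> N \<xi>) [1..<n])) (op_prod \<rho> {1..N} (Lft Rm \<rho> \<xi> n)))
    (smul c (op_prod \<rho> {1..N} (Fl Rm \<rho> \<xi> N n)))"
proof (induction n)
  case 0 then show ?case by simp
next
  case (Suc n)
  let ?S = "{1..N}"
  let ?m = "op_mult \<rho> ?S"
  let ?pr = "op_prod \<rho> ?S"
  have fS: "finite ?S" by simp
  show ?case
  proof (cases "n = 0")
    case True
    have "op_eq \<rho> ?S (?m op_id op_id) (smul 1 op_id)"
      unfolding smul_one by (rule op_mult_id_left[OF fS])
    then show ?thesis using True by (auto simp: Lft_def Fl_def)
  next
    case False
    then have n1: "1 \<le> n" and nN: "n \<le> N" and n1N: "Suc n \<le> N" using Suc.prems by auto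
    obtain c where c: "op_eq \<rho> ?S (?m (?pr (map (tr Rm \<rho> N \<xi>) [1..<n])) (?pr (Lft Rm \<rho> \<xi> n)))
        (smul c (?pr (Fl Rm \<rho> \<xi> N n)))"
      using Suc.IH[OF n1 nN] by blast
    let ?T = "?pr (map (tr Rm \<rho> N \<xi>) [1..<n])"
    let ?F = "Fl Rm \<rho> \<xi> N n"
    let ?L = "Lft Rm \<rho> \<xi> n"
    let ?R = "RgtP Rm \<rho> \<xi> N n n"
    let ?L' = "Lft Rm \<rho> \<xi> (Suc n)"
    have "op_eq \<rho> ?S (?pr (map (tr Rm \<rho> N \<xi>) [1..<Suc n])) (?m ?T (?pr [tr Rm \<rho> N \<xi> n]))"
      using op_prod_append[OF fS, where xs="map (tr Rm \<rho> N \<xi>) [1..<n]" and ys="[tr Rm \<rho> N \<xi> n]" and \<rho>=\<rho>] n1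
      by simp
    also have "op_eq \<rho> ?S \<dots> (?m ?T (?pr (?L @ ?R)))"
    proof (rule op_eq_multR)
      show "op_eq \<rho> ?S (?pr [tr Rm \<rho> N \<xi> n]) (?pr (?L @ ?R))"
        using op_mult_id_right[OF fS, of \<rho> "tr Rm \<rho> N \<xi> n"] transfer_formula'[OF init n1 nN, of \<rho> \<xi>]
        by (simp, meson op_eq_trans)
    qed
    also have "op_eq \<rho> ?S \<dots> (?m ?T (?m (?pr ?L) (?pr ?R)))"
      by (rule op_eq_multR[OF op_prod_append[OF fS]])
    also have "op_eq \<rho> ?S \<dots> (?m (?m ?T (?pr ?L)) (?pr ?R))"
      by (simp only: op_mult_assoc[OF fS] op_eq_refl)
    also have "op_eq \<rho> ?S \<dots> (?m (smul c (?pr ?F)) (?pr ?R))"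
      by (rule op_eq_multL[OF c])
    also have "op_eq \<rho> ?S \<dots> (smul c (?pr (?F @ ?R)))"
      unfolding smul_multL by (rule smul_cong[OF op_eq_sym[OF op_prod_append[OF fS]]])
    finally have A: "op_eq \<rho> ?S (?pr (map (tr Rm \<rho> N \<xi>) [1..<Suc n])) (smul c (?pr (?F @ ?R)))" .
    have "op_eq \<rho> ?S (?m (?pr (map (tr Rm \<rho> N \<xi>) [1..<Suc n])) (?pr ?L')) (?m (smul c (?pr (?F @ ?R))) (?pr ?L'))"
      by (rule op_eq_multL[OF A])
    also have "op_eq \<rho> ?S \<dots> (smul c (?pr (?F @ ?R @ ?L')))"
      unfolding smul_multL by (rule smul_cong) (use op_prod_append[OF fS, where xs="?F @ ?R" and ys="?L'" and \<rho>=\<rho>] in \<open>simp add: op_eq_sym\<close>)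
    finally have B: "op_eq \<rho> ?S (?m (?pr (map (tr Rm \<rho> N \<xi>) [1..<Suc n])) (?pr ?L')) (smul c (?pr (?F @ ?R @ ?L')))" .
    define Bl where "Bl i = RgtP Rm \<rho> \<xi> N i (Suc n)" for i
    define X where "X i = gR Rm \<rho> \<xi> i (Suc n)" for i
    define Y where "Y k = gR Rm \<rho> \<xi> (Suc n) k" for k
    have Rsplit: "RgtP Rm \<rho> \<xi> N i n = Bl i @ [X i]" for i
    proof -
      have "[Suc n..<Suc N] = Suc n # [Suc (Suc n)..<Suc N]" using n1N by (simp add: upt_conv_Cons)
      then show ?thesis by (simp add: RgtP_def Bl_def X_def)
    qed
    have list: "?F @ ?R @ ?L' = concat (map (\<lambda>i. Bl i @ [X i]) [1..<Suc n]) @ map Y (rev [1..<Suc n])"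
    proof -
      have "?F @ ?R = concat (map (\<lambda>i. RgtP Rm \<rho> \<xi> N i n) [1..<Suc n])"
        using n1 by (simp add: Fl_def)
      also have "\<dots> = concat (map (\<lambda>i. Bl i @ [X i]) [1..<Suc n])" by (simp add: Rsplit)
      finally have 1: "?F @ ?R = concat (map (\<lambda>i. Bl i @ [X i]) [1..<Suc n])" .
      have Yeq: "Y = gR Rm \<rho> \<xi> (Suc n)" by (rule ext) (simp add: Y_def)
      have "?F @ ?R @ ?L' = (?F @ ?R) @ ?L'" by simp
      then show ?thesis unfolding 1 by (simp add: Lft_def Yeq)
    qed
    have ex: "\<exists>c'. op_eq \<rho> ?S (?pr (concat (map (\<lambda>i. Bl i @ [X i]) [1..<Suc n]) @ map Y (rev [1..<Suc n])))
                 (smul c' (?pr (concat (map Bl [1..<Suc n]))))"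
    proof (rule cancel_chain[OF fS])
      fix i assume i: "1 \<le> i" "i \<le> n"
      show "\<exists>c. op_eq \<rho> ?S (?m (X i) (Y i)) (smul c op_id)"
        unfolding X_def Y_def gR_def
        by (rule exI, rule unitarity[OF ybe init fS]) (use i n1N in auto)
    next
      fix k i b assume k: "1 \<le> k" "k < i" "i \<le> n" "b \<in> set (Bl i)"
      then have "b \<in> set (map (gR Rm \<rho> \<xi> i) (rev [Suc (Suc n)..<Suc N]))" by (simp add: Bl_def RgtP_def)
      then obtain j where j0: "j \<in> set [Suc (Suc n)..<Suc N]" and jb: "b = gR Rm \<rho> \<xi> i j"
        by (auto simp del: set_upt)
      have j: "Suc n < j" "b = gR Rm \<rho> \<xi> i j" using j0 jb by auto
      show "comm \<rho> ?S (Y k) b"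
        unfolding Y_def j(2) by (rule loc_comm[OF fS loc_gR loc_gR]) (use k j in auto)
    qed
    have Feq: "concat (map Bl [1..<Suc n]) = Fl Rm \<rho> \<xi> N (Suc n)"
    proof -
      have Bleq: "Bl = (\<lambda>i. RgtP Rm \<rho> \<xi> N i (Suc n))" by (rule ext) (simp add: Bl_def)
      show ?thesis unfolding Fl_def Bleq ..
    qed
    from ex[unfolded Feq list[symmetric]] obtain c' where c': "op_eq \<rho> ?S (?pr (?F @ ?R @ ?L')) (smul c' (?pr (Fl Rm \<rho> \<xi> N (Suc n))))"
      by blast
    have "op_eq \<rho> ?S (?m (?pr (map (tr Rm \<rho> N \<xi>) [1..<Suc n])) (?pr ?L')) (smul (c * c') (?pr (Fl Rm \<rho> \<xi> N (Suc n))))"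
      using op_eq_trans[OF B smul_cong[OF c', of c]] by (simp add: smul_smul)
    then show ?thesis by blast
  qed
qed


theorem proposition3p1:
  fixes Rm :: rfam and \<rho> :: "nat \<Rightarrow> nat" and \<xi> :: "nat \<Rightarrow> complex"
    and N n :: nat and E :: "nat \<Rightarrow> nat \<Rightarrow> complex" and B :: mop
  assumes ybe: "YBE Rm"
    and init: "initial_cond Rm"
    and n_range: "1 \<le> n" "n \<le> N"
    and inv: "\<forall>i\<in>{1..n}. invertible_op \<rho> {1..N} (transfer Rm \<rho> N \<xi> (\<rho> i) (\<xi> i))"
    and B_inv:
      "op_eq \<rho> {1..N}
         (op_mult \<rho> {1..N} (op_prod \<rho> {1..N} (map (\<lambda>i. transfer Rm \<rho> N \<xi> (\<rho> i) (\<xi> i)) [1..<Suc n])) B)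
         op_id"
      "op_eq \<rho> {1..N}
         (op_mult \<rho> {1..N} B (op_prod \<rho> {1..N} (map (\<lambda>i. transfer Rm \<rho> N \<xi> (\<rho> i) (\<xi> i)) [1..<Suc n])))
         op_id"
  shows "op_eq \<rho> {1..N} (local_op n E)
           (op_mult \<rho> {1..N}
              (op_mult \<rho> {1..N}
                 (op_prod \<rho> {1..N} (map (\<lambda>i. transfer Rm \<rho> N \<xi> (\<rho> i) (\<xi> i)) [1..<n]))
                 (ptrace0 (\<rho> n)
                    (op_mult (\<rho>(0 := \<rho> n)) {0..N} (local_op 0 E) (monodromy Rm \<rho> N \<xi> (\<rho> n) (\<xi> n)))))
              B)"
proof -
  let ?S = "{1..N}"
  let ?m = "op_mult \<rho> ?S"
  let ?pr = "op_prod \<rho> ?S"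
  have fS: "finite ?S" by simp
  have treq: "(\<lambda>i. transfer Rm \<rho> N \<xi> (\<rho> i) (\<xi> i)) = tr Rm \<rho> N \<xi>"
    by (rule ext) (simp add: tr_def)
  define X where "X = ptrace0 (\<rho> n) (op_mult (\<rho>(0 := \<rho> n)) {0..N} (local_op 0 E) (monodromy Rm \<rho> N \<xi> (\<rho> n) (\<xi> n)))"
  define T' where "T' = ?pr (map (tr Rm \<rho> N \<xi>) [1..<n])"
  define Tn where "Tn = ?pr (map (tr Rm \<rho> N \<xi>) [1..<Suc n])"
  define En where "En = local_op n E"
  let ?L = "Lft Rm \<rho> \<xi> n"
  let ?R = "RgtP Rm \<rho> \<xi> N n n"
  have h1: "op_eq \<rho> ?S (?m Tn B) op_id" using B_inv(1) unfolding treq Tn_def .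
  have h2: "op_eq \<rho> ?S Tn (?m T' (?m (?pr ?L) (?pr ?R)))"
  proof -
    have "op_eq \<rho> ?S Tn (?m T' (?pr [tr Rm \<rho> N \<xi> n]))"
      using op_prod_append[OF fS, where xs="map (tr Rm \<rho> N \<xi>) [1..<n]" and ys="[tr Rm \<rho> N \<xi> n]" and \<rho>=\<rho>] n_range
      unfolding Tn_def T'_def by simp
    also have "op_eq \<rho> ?S \<dots> (?m T' (?pr (?L @ ?R)))"
    proof (rule op_eq_multR)
      show "op_eq \<rho> ?S (?pr [tr Rm \<rho> N \<xi> n]) (?pr (?L @ ?R))"
        using op_mult_id_right[OF fS, of \<rho> "tr Rm \<rho> N \<xi> n"] transfer_formula'[OF init n_range, of \<rho> \<xi>]
        by (simp, meson op_eq_trans)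
    qed
    also have "op_eq \<rho> ?S \<dots> (?m T' (?m (?pr ?L) (?pr ?R)))"
      by (rule op_eq_multR[OF op_prod_append[OF fS]])
    finally show ?thesis .
  qed
  obtain c where c: "op_eq \<rho> ?S (?m T' (?pr ?L)) (smul c (?pr (Fl Rm \<rho> \<xi> N n)))"
    using Q_claim[OF ybe init n_range, of \<rho> \<xi>] unfolding T'_def by blast
  have cF: "comm \<rho> ?S En (?pr (Fl Rm \<rho> \<xi> N n))"
  proof (rule comm_prod[OF fS])
    fix b assume "b \<in> set (Fl Rm \<rho> \<xi> N n)"
    then obtain i j where ij: "i \<in> set [1..<n]" "j \<in> set (rev [Suc n..<Suc N])" "b = gR Rm \<rho> \<xi> i j"
      by (auto simp: Fl_def RgtP_def simp del: set_upt set_rev)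
    have "i < n" "n < j" using ij(1,2) by auto
    then show "comm \<rho> ?S En b"
      unfolding En_def ij(3) by (intro loc_comm[OF fS loc_local loc_gR]) auto
  qed
  have cQ: "comm \<rho> ?S En (?m T' (?pr ?L))"
    by (rule comm_cong[OF comm_smul[OF cF] op_eq_sym[OF c]])
  have hX: "op_eq \<rho> ?S X (?pr (?L @ En # ?R))"
    unfolding X_def En_def by (rule trace_formula'[OF init n_range])
  have "op_eq \<rho> ?S En (?m En op_id)"
    by (rule op_eq_sym[OF op_mult_id_right[OF fS]])
  also have "op_eq \<rho> ?S \<dots> (?m En (?m Tn B))"
    by (rule op_eq_multR[OF op_eq_sym[OF h1]])
  also have "op_eq \<rho> ?S \<dots> (?m (?m En Tn) B)"
    by (simp only: op_mult_assoc[OF fS] op_eq_refl)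
  also have "op_eq \<rho> ?S \<dots> (?m (?m En (?m T' (?m (?pr ?L) (?pr ?R)))) B)"
    by (intro op_eq_multL op_eq_multR h2)
  also have "op_eq \<rho> ?S \<dots> (?m (?m (?m En (?m T' (?pr ?L))) (?pr ?R)) B)"
    by (simp only: op_mult_assoc[OF fS] op_eq_refl)
  also have "op_eq \<rho> ?S \<dots> (?m (?m (?m (?m T' (?pr ?L)) En) (?pr ?R)) B)"
    using cQ unfolding comm_def by (intro op_eq_multL)
  also have "op_eq \<rho> ?S \<dots> (?m (?m T' (?m (?pr ?L) (?pr (En # ?R)))) B)"
    by (simp only: op_mult_assoc[OF fS] op_prod_Cons op_eq_refl)
  also have "op_eq \<rho> ?S \<dots> (?m (?m T' (?pr (?L @ En # ?R))) B)"
    by (intro op_eq_multL op_eq_multR op_eq_sym[OF op_prod_append[OF fS]])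
  also have "op_eq \<rho> ?S \<dots> (?m (?m T' X) B)"
    by (intro op_eq_multL op_eq_multR op_eq_sym[OF hX])
  finally show ?thesis unfolding En_def X_def T'_def treq .
qed

end
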